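(* Let $\lambda=(\lambda_1,\lambda_2)$ be a partition with two parts and $n=\lambda_1+\lambda_2$. Two vertices $p,q$ of the crystal skeleton $\mathsf{CS}(\lambda_1,\lambda_2)$ lie in the same strongly connected component if and only if $\mathsf{rcomp}(p)=\mathsf{rcomp}(q)$. Hence the strongly connected components of $\mathsf{CS}(\lambda_1,\lambda_2)$ are indexed by the rectangular compositions.
   Context: French notation; $\mathsf{SYT}(\lambda)$ standard tableaux; $\mathsf{row}(T)$ reads rows left to right from top row to bottom row; $\mathsf{std}$ replaces the $a_j$ entries $j$, in reading order, by $a_1+\dots+a_{j-1}+1,\dots,a_1+\dots+a_j$. Crystal operator $f_i$: in the subword of letters $i,i+1$ of the reading word, bracket each $i+1$ with an unbracketed $i$ to its right (parenthesis matching); $f_i$ changes the rightmost unbracketed $i$ to $i+1$. For a permutation $\pi$ of $[n]$ and $I=[i,i+2m]$, $m\ge1$, $I$ is a Dyck pattern interval of $\pi$ if the RSK insertion tableau of the subword $\pi|_I$ has bottom row $i,\dots,i+m$ and top row $i+m+1,\dots,i+2m$. The crystal skeleton $\mathsf{CS}(\lambda)$ is the directed graph on $\mathsf{SYT}(\lambda)$ with, for each Dyck pattern interval $I=[i,i+2m]$ of $\mathsf{row}(T)$, an edge $T\xrightarrow{I}\mathsf{std}(f_i(b))$, $b$ obtained from $T$ by replacing entries $i,\dots,i+m$ by $i$ and $i+m+1,\dots,i+2m$ by $i+1$ (equivalently, the crystal of semistandard tableaux of shape $\lambda$ with each quasi-crystal $\{b:\mathsf{std}(b)=T\}$ contracted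 to $T$). A tableau $T\in\mathsf{SYT}(\lambda_1,\lambda_2)$ is identified with the sequence $p\in\{1,-1\}^n$ with $p_i=-1$ if $i$ is in the bottom (first) row and $p_i=1$ if $i$ is in the second row; set $h_0=0$, $h_k=p_1+\dots+p_k$ (so $h_k\le0$). Call step $i$ eastern-exposed if $p_i=-1$ and $h_j<h_{i-1}$ for all $j$ with $i\le j\le n$. Then $p$ decomposes uniquely as $(-1)^{n_0}D_1(-1)^{n_1}D_2\cdots D_\ell(-1)^{n_\ell}$, where the $(-1)^{n_k}$ are the maximal runs of eastern-exposed steps ($n_1,\dots,n_{\ell-1}\ge1$) and each $D_k$ is a nonempty Dyck subpath (it starts and ends at the same height and never exceeds it). The rectangular composition $\mathsf{rcomp}(p)$ is the sequence of consecutive intervals of $[n]$ $(\alpha^{(0)},\beta^{(1)},\alpha^{(1)},\dots,\beta^{(\ell)},\alpha^{(\ell)})$, where $\alpha^{(k)}$ is the set of positions of the steps in $(-1)^{n_k}$ and $\beta^{(k)}$ the set of positions of the steps in $D_k$ ($\alpha^{(0)}$ or $\alpha^{(\ell)}$ may be empty). *)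

theory Defs
  imports Main
begin

text \<open>A tableau of shape (l1,l2) is a pair (r1, r2): r1 is the bottom (first, longer) row,
  r2 the top (second) row, both read left to right.\<close>

type_synonym tab = "nat list \<times> nat list"

definition SYT :: "nat \<Rightarrow> nat \<Rightarrow> tab set" where
  "SYT l1 l2 = {(r1, r2). length r1 = l1 \<and> length r2 = l2 \<and>
      sorted_wrt (<) r1 \<and> sorted_wrt (<) r2 \<and>
      set r1 \<union> set r2 = {1..l1 + l2} \<and> (\<forall>j<l2. r1 ! j < r2 ! j)}"

definition row_word :: "tab \<Rightarrow> nat list" where
  "row_word T = snd T @ fst T"

definition of_word :: "nat \<Rightarrow> nat list \<Rightarrow> tab" where
  "of_word l2 w = (drop l2 w, take l2 w)"

definition std :: "nat list \<Rightarrow> nat list" where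
  "std w = map (\<lambda>k. card {l. l < length w \<and> w ! l < w ! k}
                    + card {l. l < k \<and> w ! l = w ! k} + 1) [0..<length w]"

text \<open>Positions of unbracketed letters i (each i+1 is bracketed with an unbracketed i
  to its right; parenthesis matching, scanning left to right).
  Arguments: i, current position, number of open (unmatched) letters i+1, word.\<close>
fun unbr :: "nat \<Rightarrow> nat \<Rightarrow> nat \<Rightarrow> nat list \<Rightarrow> nat list" where
  "unbr i k c [] = []"
| "unbr i k c (x # xs) =
     (if x = Suc i then unbr i (Suc k) (Suc c) xs
      else if x = i then (if 0 < c then unbr i (Suc k) (c - 1) xs
                          else k # unbr i (Suc k) c xs)
      else unbr i (Suc k) c xs)"

definition f_op :: "nat \<Rightarrow> nat list \<Rightarrow> nat list option" where
  "f_op i w = (let U = unbr i 0 0 w in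
      if U = [] then None else Some (w[last U := Suc i]))"

text \<open>Tableaux as lists of rows, first (bottom) row first.\<close>
fun row_insert :: "nat \<Rightarrow> nat list list \<Rightarrow> nat list list" where
  "row_insert x [] = [[x]]"
| "row_insert x (r # rs) =
     (if \<forall>y\<in>set r. y \<le> x then (r @ [x]) # rs
      else (takeWhile (\<lambda>y. y \<le> x) r @ x # tl (dropWhile (\<lambda>y. y \<le> x) r))
           # row_insert (hd (dropWhile (\<lambda>y. y \<le> x) r)) rs)"

definition insertion_tableau :: "nat list \<Rightarrow> nat list list" where
  "insertion_tableau w = foldl (\<lambda>P x. row_insert x P) [] w"

definition dyck_interval :: "nat \<Rightarrow> nat list \<Rightarrow> nat \<Rightarrow> nat \<Rightarrow> bool" where
  "dyck_interval n w i m \<longleftrightarrow> 1 \<le> m \<and> 1 \<le> i \<and> i + 2 * m \<le> n \<and>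
     insertion_tableau (filter (\<lambda>x. i \<le> x \<and> x \<le> i + 2 * m) w)
       = [[i..<i + m + 1], [i + m + 1..<i + 2 * m + 1]]"

definition relabel :: "nat \<Rightarrow> nat \<Rightarrow> nat \<Rightarrow> nat" where
  "relabel i m x = (if i \<le> x \<and> x \<le> i + m then i
                    else if i + m + 1 \<le> x \<and> x \<le> i + 2 * m then i + 1 else x)"

definition CS_edge :: "nat \<Rightarrow> nat \<Rightarrow> tab \<Rightarrow> tab \<Rightarrow> bool" where
  "CS_edge l1 l2 T T' \<longleftrightarrow> T \<in> SYT l1 l2 \<and> T' \<in> SYT l1 l2 \<and>
     (\<exists>i m w'. dyck_interval (l1 + l2) (row_word T) i m \<and>
        f_op i (map (relabel i m) (row_word T)) = Some w' \<and>
        T' = of_word l2 (std w'))"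

definition same_scc :: "nat \<Rightarrow> nat \<Rightarrow> tab \<Rightarrow> tab \<Rightarrow> bool" where
  "same_scc l1 l2 T T' \<longleftrightarrow> (CS_edge l1 l2)\<^sup>*\<^sup>* T T' \<and> (CS_edge l1 l2)\<^sup>*\<^sup>* T' T"

definition path_of :: "tab \<Rightarrow> nat \<Rightarrow> int" where
  "path_of T k = (if k \<in> set (fst T) then -1 else 1)"

definition height :: "(nat \<Rightarrow> int) \<Rightarrow> nat \<Rightarrow> int" where
  "height p k = (\<Sum>j = 1..k. p j)"

definition eastern_exposed :: "nat \<Rightarrow> (nat \<Rightarrow> int) \<Rightarrow> nat \<Rightarrow> bool" where
  "eastern_exposed n p i \<longleftrightarrow> 1 \<le> i \<and> i \<le> n \<and> p i = -1 \<and>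
     (\<forall>j. i \<le> j \<and> j \<le> n \<longrightarrow> height p j < height p (i - 1))"

fun runs :: "('a \<Rightarrow> bool) \<Rightarrow> 'a list \<Rightarrow> 'a list list" where
  "runs P [] = []"
| "runs P (x # xs) = (case runs P xs of
       [] \<Rightarrow> [[x]]
     | r # rs \<Rightarrow> (if r \<noteq> [] \<and> P (hd r) = P x then (x # r) # rs else [x] # r # rs))"

text \<open>rcomp(p) = (alpha0, beta1, alpha1, ..., beta_l, alpha_l): alternately the maximal runs
  of eastern-exposed steps and the maximal runs of the remaining steps (the Dyck
  subpaths D_k), with alpha0 and alpha_l empty when p starts / ends with a Dyck subpath.\<close>
definition rcomp :: "nat \<Rightarrow> (nat \<Rightarrow> int) \<Rightarrow> nat set list" where
  "rcomp n p = (let E = eastern_exposed n p; R = runs E [1..<n + 1] in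
     if R = [] then [{}] else
     map set ((if E (hd (hd R)) then [] else [[]]) @ R
              @ (if E (last (last R)) then [] else [[]])))"

end

theory Submission
  imports Defs
begin

abbreviation ee where "ee n p i \<equiv> eastern_exposed n p i"

lemma height_0[simp]: "height p 0 = 0"
  by (simp add: height_def)

lemma height_Suc: "height p (Suc k) = height p k + p (Suc k)"
  by (simp add: height_def)

lemma height_run:
  assumes "\<forall>k. a < k \<and> k \<le> b \<longrightarrow> p k = c" and "a + d \<le> b"
  shows "height p (a + d) = height p a + c * int d"
  using assms(2)
proof (induction d)
  case 0 then show ?case by simp
next
  case (Suc d)
  then have "height p (a + d) = height p a + c * int d" by simp
  moreover have "p (Suc (a + d)) = c" using assms(1) Suc.prems by auto
  ultimately show ?case by (simp add: height_Suc algebra_simps)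
qed

lemma height_run':
  assumes "\<forall>k. a < k \<and> k \<le> b \<longrightarrow> p k = c" and "a \<le> k" "k \<le> b"
  shows "height p k = height p a + c * int (k - a)"
  using height_run[OF assms(1), of "k - a"] assms(2,3) by simp

lemma height_eq_after:
  assumes "height q a = height p a" and "\<forall>k. a < k \<and> k \<le> j \<longrightarrow> q k = p k"
  shows "a \<le> j \<Longrightarrow> height q j = height p j"
  using assms(2)
proof (induction j)
  case 0 then show ?case using assms(1) by simp
next
  case (Suc j)
  show ?case
  proof (cases "a = Suc j")
    case True then show ?thesis using assms(1) by simp
  next
    case False
    then have "a \<le> j" using Suc.prems by simp
    then show ?thesis using Suc by (simp add: height_Suc)
  qed
qed

lemma height_eq_before:
  assumes "\<forall>k. 0 < k \<and> k \<le> j \<longrightarrow> q k = p k"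
  shows "height q j = height p j"
  using height_eq_after[of q 0 p j] assms by simp

lemma height_step_bound: assumes "p (Suc k) = 1 \<or> p (Suc k) = -1"
  shows "height p (Suc k) \<le> height p k + 1 \<and> height p k - 1 \<le> height p (Suc k)"
  using assms by (auto simp add: height_Suc)

lemma ee_outside:
  assumes agree: "\<forall>k. k < i \<or> i + l < k \<longrightarrow> q k = p k"
    and endeq: "height q (i + l) = height p (i + l)"
    and bnd: "\<forall>k. i \<le> k \<and> k \<le> i + l \<longrightarrow>
        height p k \<le> max (height p (i - 1)) (height p (i + l)) \<and>
        height q k \<le> max (height p (i - 1)) (height p (i + l))"
    and i1: "1 \<le> i" and iln: "i + l \<le> n" and j: "j < i \<or> i + l < j"
  shows "ee n q j = ee n p j"
proof -
  have hlow: "height q k = height p k" if "k < i" for k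
    using height_eq_before[of k q p] agree that by auto
  have hhigh: "height q k = height p k" if "i + l \<le> k" for k
    using height_eq_after[of q "i+l" p k] agree endeq that by auto
  show ?thesis
  proof (cases "i + l < j")
    case True
    have e1: "height q (j - 1) = height p (j - 1)" using hhigh True by simp
    have e2: "\<forall>k. j \<le> k \<longrightarrow> height q k = height p k" using hhigh True by simp
    have e3: "q j = p j" using agree True by simp
    show ?thesis unfolding eastern_exposed_def using e1 e2 e3 by auto
  next
    case False
    then have ji: "j < i" using j by simp
    have hj: "height q (j - 1) = height p (j - 1)" using hlow ji by simp
    have qj: "q j = p j" using agree ji by simp
    have A: "height r k < height p (j - 1)"
      if r: "r = p \<or> r = q" and k: "j \<le> k" "k \<le> n" and ex: "\<forall>k. j \<le> k \<and> k \<le> n \<longrightarrow> height s k < height p (j - 1)"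
        and s: "s = p \<or> s = q" for r s k
    proof -
      have "j \<le> i - 1" "i - 1 \<le> n" "j \<le> i + l" using ji iln by auto
      then have e1: "height s (i - 1) < height p (j - 1)" and e2: "height s (i + l) < height p (j - 1)"
        using ex iln by auto
      have e1': "height p (i - 1) < height p (j - 1)" using e1 s hlow i1 by auto
      have e2': "height p (i + l) < height p (j - 1)" using e2 s hhigh by auto
      show ?thesis
      proof (cases "k < i \<or> i + l \<le> k")
        case True
        then have "height r k = height s k" using r s hlow hhigh by auto
        then show ?thesis using ex k by auto
      next
        case False
        then have "height r k \<le> max (height p (i - 1)) (height p (i + l))" using bnd r by auto
        then show ?thesis using e1' e2' by auto
      qed
    qed
    show ?thesis unfolding eastern_exposed_def
    proof (intro iffI conjI allI impI)
      fix k assume "1 \<le> j \<and> j \<le> n \<and> q j = - 1 \<and> (\<forall>k. j \<le> k \<and> k \<le> n \<longrightarrow> height q k < height q (j - 1))" "j \<le> k \<and> k \<le> n"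
      then show "height p k < height p (j - 1)" using A[of p k q] hj by auto
    next
      fix k assume "1 \<le> j \<and> j \<le> n \<and> p j = - 1 \<and> (\<forall>k. j \<le> k \<and> k \<le> n \<longrightarrow> height p k < height p (j - 1))" "j \<le> k \<and> k \<le> n"
      then show "height q k < height q (j - 1)" using A[of q k p] hj by auto
    qed (use qj in auto)
  qed
qed

lemma heights_agree:
  assumes agree: "\<forall>k. k < i \<or> i + l < k \<longrightarrow> q k = p k"
    and endeq: "height q (i + l) = height p (i + l)"
  shows "k < i \<or> i + l \<le> k \<Longrightarrow> height q k = height p k"
  using height_eq_before[of k q p] height_eq_after[of q "i+l" p k] agree endeq by auto

definition pat1 :: "(nat \<Rightarrow> int) \<Rightarrow> nat \<Rightarrow> nat \<Rightarrow> bool" where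
  "pat1 p i m \<longleftrightarrow> p i = 1 \<and> (\<forall>k. i < k \<and> k \<le> i + m \<longrightarrow> p k = -1) \<and>
     (\<forall>k. i + m < k \<and> k \<le> i + 2 * m \<longrightarrow> p k = 1)"

definition pat2 :: "(nat \<Rightarrow> int) \<Rightarrow> nat \<Rightarrow> nat \<Rightarrow> bool" where
  "pat2 p i m \<longleftrightarrow> (\<forall>k. i \<le> k \<and> k \<le> i + m \<longrightarrow> p k = -1) \<and>
     (\<forall>k. i + m < k \<and> k \<le> i + 2 * m \<longrightarrow> p k = 1)"

definition mvrel :: "nat \<Rightarrow> (nat \<Rightarrow> int) \<Rightarrow> (nat \<Rightarrow> int) \<Rightarrow> bool" where
  "mvrel n p q \<longleftrightarrow> (\<exists>i m. 1 \<le> m \<and> 1 \<le> i \<and> i + 2 * m \<le> n \<and>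
     ((pat1 p i m \<and> q = p(i := -1, i + m := 1)) \<or> (pat2 p i m \<and> q = p(i + m := 1, i + 2 * m := -1))))"

definition valid :: "nat \<Rightarrow> int \<Rightarrow> (nat \<Rightarrow> int) \<Rightarrow> bool" where
  "valid n hn p \<longleftrightarrow> (\<forall>k. p k = 1 \<or> (1 \<le> k \<and> k \<le> n \<and> p k = -1)) \<and>
     (\<forall>k\<le>n. height p k \<le> 0) \<and> height p n = hn"

definition W :: "nat \<Rightarrow> (nat \<Rightarrow> int) \<Rightarrow> int" where
  "W n p = (\<Sum>k = 1..n. int k * p k)"

definition phi :: "nat \<Rightarrow> (nat \<Rightarrow> int) \<Rightarrow> nat" where
  "phi n p = \<Sum> {j \<in> {1..n}. ee n p j}"

lemma W_upd: assumes "1 \<le> a" "a \<le> n"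
  shows "W n (p(a := x)) = W n p + int a * (x - p a)"
proof -
  have f: "finite {1..n}" by simp
  have a: "a \<in> {1..n}" using assms by simp
  have "W n (p(a := x)) = int a * (p(a := x)) a + (\<Sum>k \<in> {1..n} - {a}. int k * (p(a := x)) k)"
    unfolding W_def by (rule sum.remove[OF f a])
  then have "W n (p(a := x)) = int a * x + (\<Sum>k \<in> {1..n} - {a}. int k * (p(a := x)) k)" by simp
  also have "(\<Sum>k \<in> {1..n} - {a}. int k * (p(a := x)) k) = (\<Sum>k \<in> {1..n} - {a}. int k * p k)"
    by (rule sum.cong) auto
  also have "(\<Sum>k \<in> {1..n} - {a}. int k * p k) = W n p - int a * p a"
    unfolding W_def using sum.remove[OF f a, of "\<lambda>k. int k * p k"] by simp
  finally have E: "W n (p(a := x)) = int a * x + (W n p - int a * p a)" .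
  show ?thesis unfolding E by (simp add: algebra_simps)
qed

lemma mv1_heights:
  assumes pat: "pat1 p i m" and i1: "1 \<le> i" and m1: "1 \<le> m"
    and q: "q = p(i := -1, i + m := 1)"
  shows "\<And>k. i \<le> k \<Longrightarrow> k \<le> i + m \<Longrightarrow> height p k = height p (i - 1) + 1 - int (k - i)"
    and "\<And>k. i + m \<le> k \<Longrightarrow> k \<le> i + 2 * m \<Longrightarrow> height p k = height p (i - 1) + 1 - int m + int (k - i - m)"
    and "\<And>k. i - 1 \<le> k \<Longrightarrow> k \<le> i + m - 1 \<Longrightarrow> height q k = height p (i - 1) - int (k - (i - 1))"
    and "\<And>k. i + m - 1 \<le> k \<Longrightarrow> k \<le> i + 2 * m \<Longrightarrow> height q k = height p (i - 1) - int m + int (k - (i + m - 1))"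
proof -
  let ?H = "height p (i - 1)"
  have pi: "p i = 1" and dn: "\<forall>k. i < k \<and> k \<le> i + m \<longrightarrow> p k = -1"
    and up: "\<forall>k. i + m < k \<and> k \<le> i + 2 * m \<longrightarrow> p k = 1" using pat unfolding pat1_def by auto
  have hi: "height p i = ?H + 1" using pi height_Suc[of p "i - 1"] i1 by simp
  show A: "height p k = ?H + 1 - int (k - i)" if "i \<le> k" "k \<le> i + m" for k
    using height_run'[OF dn that] hi by simp
  show "height p k = ?H + 1 - int m + int (k - i - m)" if "i + m \<le> k" "k \<le> i + 2 * m" for k
    using height_run'[OF up that] A[of "i + m"] by simp
  have qdn: "\<forall>k. i - 1 < k \<and> k \<le> i + m - 1 \<longrightarrow> q k = -1"
  proof (intro allI impI)
    fix k assume "i - 1 < k \<and> k \<le> i + m - 1"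
    show "q k = -1"
    proof (cases "k = i")
      case False
      then have "i < k" "k \<le> i + m" "k \<noteq> i + m" using \<open>i - 1 < k \<and> k \<le> i + m - 1\<close> m1 i1 by auto
      then show ?thesis using q dn False by auto
    qed (use q m1 in auto)
  qed
  have qup: "\<forall>k. i + m - 1 < k \<and> k \<le> i + 2 * m \<longrightarrow> q k = 1"
    using q up m1 i1 by auto
  have hq0: "height q (i - 1) = ?H"
    by (rule height_eq_before) (use q i1 in auto)
  show B: "height q k = ?H - int (k - (i - 1))" if "i - 1 \<le> k" "k \<le> i + m - 1" for k
    using height_run'[OF qdn that] hq0 by simp
  show "height q k = ?H - int m + int (k - (i + m - 1))" if "i + m - 1 \<le> k" "k \<le> i + 2 * m" for k
    using height_run'[OF qup that] B[of "i + m - 1"] i1 m1 by simp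
qed

lemma mv1_props:
  assumes pat: "pat1 p i m" and i1: "1 \<le> i" and m1: "1 \<le> m" and n: "i + 2 * m \<le> n"
    and q: "q = p(i := -1, i + m := 1)"
  shows "ee n q j = ee n p j"
    and "height q n = height p n"
    and "(\<forall>k\<le>n. height p k \<le> 0) \<Longrightarrow> (\<forall>k\<le>n. height q k \<le> 0)"
    and "W n q = W n p + 2 * int m"
proof -
  let ?H = "height p (i - 1)"
  note h = mv1_heights[OF pat i1 m1 q]
  have pi: "p i = 1" and dn: "\<forall>k. i < k \<and> k \<le> i + m \<longrightarrow> p k = -1"
    and up: "\<forall>k. i + m < k \<and> k \<le> i + 2 * m \<longrightarrow> p k = 1" using pat unfolding pat1_def by auto
  have agree: "\<forall>k. k < i \<or> i + 2 * m < k \<longrightarrow> q k = p k" using q m1 by auto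
  have ep: "height p (i + 2 * m) = ?H + 1" using h(2)[of "i + 2 * m"] by simp
  have eq: "height q (i + 2 * m) = ?H + 1" using h(4)[of "i + 2 * m"] m1 i1 by simp
  have bp: "height p k \<le> ?H + 1" if "i \<le> k" "k \<le> i + 2 * m" for k
    using h(1)[of k] h(2)[of k] that by (cases "k \<le> i + m") auto
  have bq: "height q k \<le> ?H + 1" if "i \<le> k" "k \<le> i + 2 * m" for k
    using h(3)[of k] h(4)[of k] that by (cases "k \<le> i + m - 1") auto
  have hag: "height q k = height p k" if "k < i \<or> i + 2 * m \<le> k" for k
    using heights_agree[OF agree] ep eq that by auto
  show "height q n = height p n" using hag n by simp
  show "(\<forall>k\<le>n. height p k \<le> 0) \<Longrightarrow> (\<forall>k\<le>n. height q k \<le> 0)"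
  proof (intro allI impI)
    fix k assume A: "\<forall>k\<le>n. height p k \<le> 0" and k: "k \<le> n"
    show "height q k \<le> 0"
    proof (cases "k < i \<or> i + 2 * m \<le> k")
      case True then show ?thesis using hag A k by simp
    next
      case False then show ?thesis using bq[of k] ep A n by force
    qed
  qed
  show "ee n q j = ee n p j"
  proof (cases "j < i \<or> i + 2 * m < j")
    case True
    show ?thesis
    proof (rule ee_outside[OF agree _ _ i1 n True])
      show "height q (i + 2 * m) = height p (i + 2 * m)" using ep eq by simp
      show "\<forall>k. i \<le> k \<and> k \<le> i + 2 * m \<longrightarrow>
        height p k \<le> max (height p (i - 1)) (height p (i + 2 * m)) \<and>
        height q k \<le> max (height p (i - 1)) (height p (i + 2 * m))" using bp bq ep by auto
    qed
  next
    case False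
    then have j: "i \<le> j" "j \<le> i + 2 * m" by auto
    have np: "\<not> ee n p j"
    proof
      assume E: "ee n p j"
      then have "p j = -1" unfolding eastern_exposed_def by simp
      have j2a: "i < j" using \<open>p j = -1\<close> pi j by (cases "i = j") auto
      have j2b: "j \<le> i + m" using \<open>p j = -1\<close> up[rule_format, of j] j by (cases "j \<le> i + m") auto
      note j2 = j2a j2b
      have "height p (i + 2 * m) < height p (j - 1)" using E n j unfolding eastern_exposed_def by auto
      moreover have "height p (j - 1) = ?H + 1 - int (j - 1 - i)" using h(1)[of "j - 1"] j2 by simp
      ultimately show False using ep j2 by simp
    qed
    have nq: "\<not> ee n q j"
    proof
      assume E: "ee n q j"
      then have "q j = -1" unfolding eastern_exposed_def by simp
      then have j2: "j \<le> i + m - 1"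
      proof -
        have "j \<noteq> i + m" using \<open>q j = -1\<close> q by auto
        moreover have "\<not> (i + m < j)" using \<open>q j = -1\<close> q up j m1 by (auto split: if_splits)
        ultimately show ?thesis by simp
      qed
      have "height q (i + 2 * m) < height q (j - 1)" using E n j unfolding eastern_exposed_def by auto
      moreover have "height q (j - 1) = ?H - int (j - 1 - (i - 1))" using h(3)[of "j - 1"] j2 j i1 by simp
      ultimately show False using eq by simp
    qed
    show ?thesis using np nq by simp
  qed
  show "W n q = W n p + 2 * int m"
  proof -
    have "W n q = W n (p(i := -1)) + int (i + m) * (1 - (p(i := -1)) (i + m))"
      unfolding q by (rule W_upd) (use i1 n in auto)
    also have "W n (p(i := -1)) = W n p + int i * (-1 - p i)"
      by (rule W_upd) (use i1 n in auto)
    finally show ?thesis using pi dn m1 by simp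
  qed
qed

lemma mv2_heights:
  assumes pat: "pat2 p i m" and i1: "1 \<le> i" and m1: "1 \<le> m"
    and q: "q = p(i + m := 1, i + 2 * m := -1)"
  shows "\<And>k. i - 1 \<le> k \<Longrightarrow> k \<le> i + m \<Longrightarrow> height p k = height p (i - 1) - int (k - (i - 1))"
    and "\<And>k. i + m \<le> k \<Longrightarrow> k \<le> i + 2 * m \<Longrightarrow> height p k = height p (i - 1) - int m - 1 + int (k - (i + m))"
    and "\<And>k. i - 1 \<le> k \<Longrightarrow> k \<le> i + m - 1 \<Longrightarrow> height q k = height p (i - 1) - int (k - (i - 1))"
    and "\<And>k. i + m - 1 \<le> k \<Longrightarrow> k \<le> i + 2 * m - 1 \<Longrightarrow> height q k = height p (i - 1) - int m + int (k - (i + m - 1))"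
    and "height q (i + 2 * m) = height p (i - 1) - 1"
proof -
  let ?H = "height p (i - 1)"
  have dn: "\<forall>k. i - 1 < k \<and> k \<le> i + m \<longrightarrow> p k = -1"
    and up: "\<forall>k. i + m < k \<and> k \<le> i + 2 * m \<longrightarrow> p k = 1" using pat i1 unfolding pat2_def by auto
  show A: "height p k = ?H - int (k - (i - 1))" if "i - 1 \<le> k" "k \<le> i + m" for k
    using height_run'[OF dn that] by simp
  show "height p k = ?H - int m - 1 + int (k - (i + m))" if "i + m \<le> k" "k \<le> i + 2 * m" for k
    using height_run'[OF up that] A[of "i + m"] i1 by simp
  have qdn: "\<forall>k. i - 1 < k \<and> k \<le> i + m - 1 \<longrightarrow> q k = -1"
    using q dn m1 i1 by auto
  have qup: "\<forall>k. i + m - 1 < k \<and> k \<le> i + 2 * m - 1 \<longrightarrow> q k = 1"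
  proof (intro allI impI)
    fix k assume k: "i + m - 1 < k \<and> k \<le> i + 2 * m - 1"
    show "q k = 1"
    proof (cases "k = i + m")
      case False
      then have "i + m < k" "k \<le> i + 2 * m" "k \<noteq> i + 2 * m" using k m1 i1 by auto
      then show ?thesis using q up False by auto
    qed (use q m1 in auto)
  qed
  have hq0: "height q (i - 1) = ?H"
    by (rule height_eq_before) (use q i1 in auto)
  show B: "height q k = ?H - int (k - (i - 1))" if "i - 1 \<le> k" "k \<le> i + m - 1" for k
    using height_run'[OF qdn that] hq0 by simp
  show C: "height q k = ?H - int m + int (k - (i + m - 1))" if "i + m - 1 \<le> k" "k \<le> i + 2 * m - 1" for k
    using height_run'[OF qup that] B[of "i + m - 1"] i1 m1 by simp
  have "height q (i + 2 * m) = height q (i + 2 * m - 1) + q (i + 2 * m)"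
    using height_Suc[of q "i + 2 * m - 1"] m1 by simp
  then show "height q (i + 2 * m) = ?H - 1" using C[of "i + 2 * m - 1"] q m1 i1 by simp
qed

lemma mv2_props:
  assumes pat: "pat2 p i m" and i1: "1 \<le> i" and m1: "1 \<le> m" and n: "i + 2 * m \<le> n"
    and q: "q = p(i + m := 1, i + 2 * m := -1)"
  shows "ee n q j = (if j = i + 2 * m then ee n p i else if j = i then False else ee n p j)"
    and "\<not> ee n p (i + 2 * m)"
    and "height q n = height p n"
    and "(\<forall>k\<le>n. height p k \<le> 0) \<longleftrightarrow> (\<forall>k\<le>n. height q k \<le> 0)"
    and "W n q = W n p - 2 * int m"
proof -
  let ?H = "height p (i - 1)"
  note h = mv2_heights[OF pat i1 m1 q]
  have dn: "\<forall>k. i \<le> k \<and> k \<le> i + m \<longrightarrow> p k = -1"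
    and up: "\<forall>k. i + m < k \<and> k \<le> i + 2 * m \<longrightarrow> p k = 1" using pat unfolding pat2_def by auto
  have agree: "\<forall>k. k < i \<or> i + 2 * m < k \<longrightarrow> q k = p k" using q m1 by auto
  have ep: "height p (i + 2 * m) = ?H - 1" using h(2)[of "i + 2 * m"] by simp
  have eq: "height q (i + 2 * m) = ?H - 1" using h(5) .
  have bp: "height p k \<le> ?H - 1" if "i \<le> k" "k \<le> i + 2 * m" for k
    using h(1)[of k] h(2)[of k] that i1 by (cases "k \<le> i + m") auto
  have bq: "height q k \<le> ?H" if "i \<le> k" "k \<le> i + 2 * m" for k
  proof (cases "k = i + 2 * m")
    case True then show ?thesis using eq by simp
  next
    case False
    then show ?thesis using h(3)[of k] h(4)[of k] that by (cases "k \<le> i + m - 1") auto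
  qed
  have hag: "height q k = height p k" if "k < i \<or> i + 2 * m \<le> k" for k
    using heights_agree[OF agree] ep eq that by auto
  show "height q n = height p n" using hag n by simp
  show "\<not> ee n p (i + 2 * m)" using up m1 unfolding eastern_exposed_def by auto
  have Hle: "height p (i - 1) \<le> 0" if "\<forall>k\<le>n. height p k \<le> 0" using that n by simp
  show "(\<forall>k\<le>n. height p k \<le> 0) \<longleftrightarrow> (\<forall>k\<le>n. height q k \<le> 0)"
  proof
    assume A: "\<forall>k\<le>n. height p k \<le> 0"
    show "\<forall>k\<le>n. height q k \<le> 0"
    proof (intro allI impI)
      fix k assume k: "k \<le> n"
      show "height q k \<le> 0"
      proof (cases "k < i \<or> i + 2 * m \<le> k")
        case True then show ?thesis using hag A k by simp
      next
        case False then show ?thesis using bq[of k] Hle[OF A] by force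
      qed
    qed
  next
    assume A: "\<forall>k\<le>n. height q k \<le> 0"
    have "i - 1 \<le> n" using n by simp
    then have H0: "?H \<le> 0" using A hag[of "i - 1"] i1 by force
    show "\<forall>k\<le>n. height p k \<le> 0"
    proof (intro allI impI)
      fix k assume k: "k \<le> n"
      show "height p k \<le> 0"
      proof (cases "k < i \<or> i + 2 * m \<le> k")
        case True then show ?thesis using hag A k by force
      next
        case False then show ?thesis using bp[of k] H0 by force
      qed
    qed
  qed
  show "ee n q j = (if j = i + 2 * m then ee n p i else if j = i then False else ee n p j)"
  proof (cases "j < i \<or> i + 2 * m < j")
    case True
    have "ee n q j = ee n p j"
    proof (rule ee_outside[OF agree _ _ i1 n True])
      show "height q (i + 2 * m) = height p (i + 2 * m)" using ep eq by simp
      show "\<forall>k. i \<le> k \<and> k \<le> i + 2 * m \<longrightarrow>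
        height p k \<le> max (height p (i - 1)) (height p (i + 2 * m)) \<and>
        height q k \<le> max (height p (i - 1)) (height p (i + 2 * m))" using bp bq ep by force
    qed
    then show ?thesis using True m1 by auto
  next
    case False
    then have j: "i \<le> j" "j \<le> i + 2 * m" by auto
    have np: "\<not> ee n p j" if "i < j" 
    proof
      assume E: "ee n p j"
      then have "p j = -1" unfolding eastern_exposed_def by simp
      have j2b: "j \<le> i + m" using \<open>p j = -1\<close> up[rule_format, of j] j by (cases "j \<le> i + m") auto
      have "height p (i + 2 * m) < height p (j - 1)" using E n j unfolding eastern_exposed_def by auto
      moreover have "height p (j - 1) = ?H - int (j - 1 - (i - 1))" using h(1)[of "j - 1"] j2b that by simp
      ultimately show False using ep that i1 by simp
    qed
    have nq: "\<not> ee n q j" if "j < i + 2 * m"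
    proof
      assume E: "ee n q j"
      then have "q j = -1" unfolding eastern_exposed_def by simp
      then have j2: "j \<le> i + m - 1"
      proof -
        have "j \<noteq> i + m" using \<open>q j = -1\<close> q that by auto
        moreover have "\<not> (i + m < j)" using \<open>q j = -1\<close> q up j m1 that by (auto split: if_splits)
        ultimately show ?thesis by simp
      qed
      have "j \<le> i + 2 * m - 1" "i + 2 * m - 1 \<le> n" using j2 m1 n by auto
      then have "height q (i + 2 * m - 1) < height q (j - 1)" using E unfolding eastern_exposed_def by blast
      moreover have "height q (j - 1) = ?H - int (j - 1 - (i - 1))" using h(3)[of "j - 1"] j2 j i1 by simp
      moreover have "height q (i + 2 * m - 1) = ?H" using h(4)[of "i + 2 * m - 1"] m1 i1 by simp
      ultimately show False by simp
    qed
    have key: "ee n q (i + 2 * m) = ee n p i"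
    proof
      assume E: "ee n q (i + 2 * m)"
      have lt: "height q k < ?H" if "i + 2 * m \<le> k" "k \<le> n" for k
        using E that h(4)[of "i + 2 * m - 1"] m1 i1 unfolding eastern_exposed_def by auto
      show "ee n p i" unfolding eastern_exposed_def
      proof (intro conjI allI impI)
        fix k assume k: "i \<le> k \<and> k \<le> n"
        show "height p k < ?H"
        proof (cases "i + 2 * m \<le> k")
          case True then show ?thesis using lt[of k] hag[of k] k by simp
        next
          case False then show ?thesis using bp[of k] k by simp
        qed
      qed (use i1 n dn in auto)
    next
      assume E: "ee n p i"
      show "ee n q (i + 2 * m)" unfolding eastern_exposed_def
      proof (intro conjI allI impI)
        fix k assume k: "i + 2 * m \<le> k \<and> k \<le> n"
        have "height p k < ?H" using E k unfolding eastern_exposed_def by auto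
        then show "height q k < height q (i + 2 * m - 1)"
          using hag[of k] k h(4)[of "i + 2 * m - 1"] m1 i1 by simp
      qed (use i1 n q m1 in auto)
    qed
    show ?thesis
    proof (cases "j = i + 2 * m")
      case True then show ?thesis using key by simp
    next
      case F1: False
      show ?thesis
      proof (cases "j = i")
        case True then show ?thesis using nq F1 j m1 by simp
      next
        case False then show ?thesis using np nq F1 j by simp
      qed
    qed
  qed
  show "W n q = W n p - 2 * int m"
  proof -
    have "W n q = W n (p(i + m := 1)) + int (i + 2 * m) * (-1 - (p(i + m := 1)) (i + 2 * m))"
      unfolding q by (rule W_upd) (use i1 n in auto)
    also have "W n (p(i + m := 1)) = W n p + int (i + m) * (1 - p (i + m))"
      by (rule W_upd) (use i1 n in auto)
    finally show ?thesis using dn up m1 by simp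
  qed
qed

lemma mv_phi:
  assumes "mvrel n p q"
  shows "ee n q = ee n p \<or> phi n p < phi n q"
proof -
  obtain i m where im: "1 \<le> m" "1 \<le> i" "i + 2 * m \<le> n"
    and c: "(pat1 p i m \<and> q = p(i := -1, i + m := 1)) \<or> (pat2 p i m \<and> q = p(i + m := 1, i + 2 * m := -1))"
    using assms unfolding mvrel_def by blast
  show ?thesis
  proof (cases "pat1 p i m \<and> q = p(i := -1, i + m := 1)")
    case True
    then have "ee n q = ee n p" using mv1_props(1)[of p i m n q] im by auto
    then show ?thesis by simp
  next
    case False
    then have P: "pat2 p i m" and Q: "q = p(i + m := 1, i + 2 * m := -1)" using c by auto
    note E = mv2_props(1)[OF P im(2) im(1) im(3) Q]
    note N = mv2_props(2)[OF P im(2) im(1) im(3) Q]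
    show ?thesis
    proof (cases "ee n p i")
      case False
      have "ee n q j = ee n p j" for j using E[of j] N False by auto
      then show ?thesis by auto
    next
      case True
      let ?A = "{j \<in> {1..n}. ee n p j}"
      have fin: "finite ?A" by simp
      have iA: "i \<in> ?A" using True im by auto
      have jA: "i + 2 * m \<notin> ?A" using N by simp
      have "{j \<in> {1..n}. ee n q j} = insert (i + 2 * m) (?A - {i})"
        using E im True by (auto split: if_splits)
      moreover have "\<Sum> (insert (i + 2 * m) (?A - {i})) = (i + 2 * m) + \<Sum> (?A - {i})"
        by (subst sum.insert) (use fin jA in auto)
      ultimately have "phi n q = (i + 2 * m) + \<Sum> (?A - {i})"
        unfolding phi_def by simp
      moreover have "\<Sum> ?A = i + \<Sum> (?A - {i})" using sum.remove[OF fin iA, of id] by simp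
      ultimately have "phi n q = phi n p + 2 * m" unfolding phi_def by simp
      then show ?thesis using im by simp
    qed
  qed
qed

lemma obtain_least:
  fixes P :: "nat \<Rightarrow> bool"
  assumes "P n"
  obtains m where "P m" "\<And>k. k < m \<Longrightarrow> \<not> P k"
  using assms by (metis LeastI not_less_Least)

definition canon :: "nat \<Rightarrow> (nat \<Rightarrow> int) \<Rightarrow> bool" where
  "canon n p \<longleftrightarrow> (\<forall>i. 2 \<le> i \<and> i \<le> n \<and> p (i - 1) = 1 \<and> p i = -1 \<longrightarrow> ee n p i)"

lemma valid_vals: "valid n hn p \<Longrightarrow> p k \<noteq> 1 \<Longrightarrow> p k = -1 \<and> 1 \<le> k \<and> k \<le> n"
  unfolding valid_def by metis

lemma valid_out: "valid n hn p \<Longrightarrow> n < k \<Longrightarrow> p k = 1"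
  unfolding valid_def by force

lemma valid_0: "valid n hn p \<Longrightarrow> p 0 = 1"
  unfolding valid_def by force

lemma desc_step:
  assumes v: "valid n hn p" and nc: "\<not> canon n p"
  shows "\<exists>i m. 1 \<le> m \<and> 1 \<le> i \<and> i + 2 * m \<le> n \<and> pat1 p i m"
proof -
  let ?V = "{i. 2 \<le> i \<and> i \<le> n \<and> p (i - 1) = 1 \<and> p i = -1 \<and> \<not> ee n p i}"
  have fin: "finite ?V" by (rule finite_subset[of _ "{..n}"]) auto
  have ne: "?V \<noteq> {}" using nc unfolding canon_def by auto
  define i0 where "i0 = Max ?V"
  have i0V: "i0 \<in> ?V" unfolding i0_def using Max_in[OF fin ne] .
  have maxV: "\<And>x. x \<in> ?V \<Longrightarrow> x \<le> i0" unfolding i0_def using Max_ge[OF fin] by blast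
  have i02: "2 \<le> i0" and i0n: "i0 \<le> n" and pi0': "p (i0 - 1) = 1" and pi0: "p i0 = -1"
    and nee: "\<not> ee n p i0" using i0V by auto
  let ?H = "height p (i0 - 1)"
  have "i0 < n + 1 \<and> p (n + 1) = 1" using valid_out[OF v, of "n+1"] i0n by simp
  then obtain s1 where s1: "i0 < s1 \<and> p s1 = 1" and s1m: "\<And>k. k < s1 \<Longrightarrow> \<not> (i0 < k \<and> p k = 1)"
    using obtain_least[of "\<lambda>k. i0 < k \<and> p k = 1" "n+1"] by blast
  have dn: "\<forall>k. i0 - 1 < k \<and> k \<le> s1 - 1 \<longrightarrow> p k = -1"
  proof (intro allI impI)
    fix k assume k: "i0 - 1 < k \<and> k \<le> s1 - 1"
    show "p k = -1"
    proof (cases "k = i0")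
      case True then show ?thesis using pi0 by simp
    next
      case False
      have "k < s1" "i0 < k" using k s1 i02 False by auto
      then have "p k \<noteq> 1" using s1m[of k] by auto
      then show ?thesis using valid_vals[OF v] by blast
    qed
  qed
  have hdn: "height p k = ?H - int (k - (i0 - 1))" if "i0 - 1 \<le> k" "k \<le> s1 - 1" for k
    using height_run'[OF dn that] by simp
  have s1n: "s1 \<le> n"
  proof (rule ccontr)
    assume "\<not> s1 \<le> n"
    then have "ee n p i0" unfolding eastern_exposed_def
    proof (intro conjI allI impI)
      fix k assume "\<not> s1 \<le> n" "i0 \<le> k \<and> k \<le> n"
      then have "i0 - 1 \<le> k" "k \<le> s1 - 1" "k - (i0 - 1) \<ge> 1" using i02 by auto
      then show "height p k < ?H" using hdn[of k] by simp
    qed (use i02 i0n pi0 in auto)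
    then show False using nee by simp
  qed
  have "s1 < n + 1 \<and> (p (n+1) = -1 \<or> n < n + 1)" using s1n by simp
  then obtain s2 where s2: "s1 < s2 \<and> (p s2 = -1 \<or> n < s2)" and s2m: "\<And>k. k < s2 \<Longrightarrow> \<not> (s1 < k \<and> (p k = -1 \<or> n < k))"
    using obtain_least[of "\<lambda>k. s1 < k \<and> (p k = -1 \<or> n < k)" "n+1"] by blast
  have s2n: "s2 \<le> n + 1" using s2m[of "n+1"] s1n by force
  have up: "\<forall>k. s1 - 1 < k \<and> k \<le> s2 - 1 \<longrightarrow> p k = 1"
  proof (intro allI impI)
    fix k assume k: "s1 - 1 < k \<and> k \<le> s2 - 1"
    show "p k = 1"
    proof (cases "k = s1")
      case True then show ?thesis using s1 by simp
    next
      case False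
      have "k < s2" "s1 < k" using k s1 s2 False by auto
      then have "p k \<noteq> -1" using s2m[of k] by auto
      then show ?thesis using valid_vals[OF v] by force
    qed
  qed
  have hup: "height p k = height p (s1 - 1) + int (k - (s1 - 1))" if "s1 - 1 \<le> k" "k \<le> s2 - 1" for k
    using height_run'[OF up that] by simp
  show ?thesis
  proof (cases "s1 - i0 \<le> s2 - s1")
    case True
    let ?a = "s1 - i0"
    have "pat1 p (i0 - 1) ?a" unfolding pat1_def
    proof (intro conjI allI impI)
      show "p (i0 - 1) = 1" by (rule pi0')
      fix k assume "i0 - 1 < k \<and> k \<le> i0 - 1 + ?a"
      then have "i0 - 1 < k \<and> k \<le> s1 - 1" using s1 i02 by auto
      then show "p k = -1" using dn by blast
    next
      fix k assume "i0 - 1 + ?a < k \<and> k \<le> i0 - 1 + 2 * ?a"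
      then have "s1 - 1 < k \<and> k \<le> s2 - 1" using s1 True i02 by auto
      then show "p k = 1" using up by blast
    qed
    moreover have "i0 - 1 + 2 * ?a \<le> n" using True s2n s1 i02 by auto
    moreover have "1 \<le> ?a" using s1 by auto
    moreover have "1 \<le> i0 - 1" using i02 by simp
    ultimately show ?thesis by blast
  next
    case False
    have hs2: "height p (s2 - 1) < ?H" using hup[of "s2 - 1"] hdn[of "s1 - 1"] s1 s2 False i02 by auto
    have "ee n p i0" unfolding eastern_exposed_def
    proof (intro conjI allI impI)
      fix k assume k: "i0 \<le> k \<and> k \<le> n"
      show "height p k < ?H"
      proof (cases "k \<le> s1 - 1")
        case True
        have "i0 - 1 \<le> k" using k by auto
        then show ?thesis using hdn[of k] True k i02 by simp
      next
        case F1: False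
        show ?thesis
        proof (cases "k \<le> s2 - 1")
          case True
          then have "height p k \<le> height p (s2 - 1)" using hup[of k] hup[of "s2 - 1"] F1 s2 by auto
          then show ?thesis using hs2 by simp
        next
          case False
          then have s2n': "s2 \<le> n" and ps2: "p s2 = -1" using k s2 by auto
          have ps2': "p (s2 - 1) = 1" using up s1 s2 by auto
          have "s2 \<notin> ?V" using maxV[of s2] s1 s2 by auto
          then have "ee n p s2" using s2n' ps2 ps2' s1 s2 i02 by auto
          then have "height p k < height p (s2 - 1)" using k False unfolding eastern_exposed_def by auto
          then show ?thesis using hs2 by simp
        qed
      qed
    qed (use i02 i0n pi0 in auto)
    then show ?thesis using nee by simp
  qed
qed

lemma asc_step:
  assumes v: "valid n hn p" and nc: "\<not> canon n p"
  shows "\<exists>i m. 1 \<le> m \<and> 1 \<le> i \<and> i + 2 * m \<le> n \<and> pat2 (p(i + m := -1, i + 2 * m := 1)) i m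
           \<and> \<not> ee n p (i + 2 * m) \<and> p (i + m) = 1 \<and> p (i + 2 * m) = -1"
proof -
  let ?V = "{i. 2 \<le> i \<and> i \<le> n \<and> p (i - 1) = 1 \<and> p i = -1 \<and> \<not> ee n p i}"
  have fin: "finite ?V" by (rule finite_subset[of _ "{..n}"]) auto
  have ne: "?V \<noteq> {}" using nc unfolding canon_def by auto
  define i0 where "i0 = Min ?V"
  have i0V: "i0 \<in> ?V" unfolding i0_def using Min_in[OF fin ne] .
  have minV: "\<And>x. x \<in> ?V \<Longrightarrow> i0 \<le> x" unfolding i0_def using Min_le[OF fin] by blast
  have i02: "2 \<le> i0" and i0n: "i0 \<le> n" and pi0': "p (i0 - 1) = 1" and pi0: "p i0 = -1"
    and nee: "\<not> ee n p i0" using i0V by auto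
  have bal: "\<And>k. k \<le> n \<Longrightarrow> height p k \<le> 0" using v unfolding valid_def by auto
  let ?T1 = "{k. k < i0 \<and> (k = 0 \<or> p k = -1)}"
  have finT1: "finite ?T1" by (rule finite_subset[of _ "{..i0}"]) auto
  have neT1: "0 \<in> ?T1" using i02 by auto
  define t1 where "t1 = Max ?T1"
  have t1T: "t1 \<in> ?T1" unfolding t1_def using Max_in[OF finT1] neT1 by blast
  have t1max: "\<And>x. x \<in> ?T1 \<Longrightarrow> x \<le> t1" unfolding t1_def using Max_ge[OF finT1] by blast
  have up: "\<forall>k. t1 < k \<and> k \<le> i0 - 1 \<longrightarrow> p k = 1"
  proof (intro allI impI)
    fix k assume k: "t1 < k \<and> k \<le> i0 - 1"
    show "p k = 1"
    proof (rule ccontr)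
      assume "p k \<noteq> 1"
      then have "p k = -1" using valid_vals[OF v] by blast
      moreover have "k < i0" using k i02 by auto
      ultimately have "k \<in> ?T1" by simp
      then show False using t1max[of k] k by simp
    qed
  qed
  have t1lt: "t1 < i0 - 1"
  proof -
    have "t1 < i0" using t1T by simp
    moreover have "t1 \<noteq> i0 - 1" using t1T pi0' i02 by auto
    ultimately show ?thesis by simp
  qed
  have t1ne: "t1 \<noteq> 0"
  proof
    assume t0: "t1 = 0"
    have "height p (i0 - 1) = height p 0 + 1 * int (i0 - 1 - 0)"
      using height_run'[OF up, of "i0 - 1"] t0 by simp
    then have "height p (i0 - 1) > 0" using i02 by simp
    moreover have "height p (i0 - 1) \<le> 0" using bal i0n by simp
    ultimately show False by simp
  qed
  have pt1: "p t1 = -1" using t1T t1ne by simp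
  let ?T0 = "{k. k < t1 \<and> (k = 0 \<or> p k = 1)}"
  have finT0: "finite ?T0" by (rule finite_subset[of _ "{..t1}"]) auto
  have neT0: "0 \<in> ?T0" using t1ne by auto
  define t0 where "t0 = Max ?T0"
  have t0T: "t0 \<in> ?T0" unfolding t0_def using Max_in[OF finT0] neT0 by blast
  have t0max: "\<And>x. x \<in> ?T0 \<Longrightarrow> x \<le> t0" unfolding t0_def using Max_ge[OF finT0] by blast
  have t0lt: "t0 < t1" using t0T by simp
  have dn: "\<forall>k. t0 < k \<and> k \<le> t1 \<longrightarrow> p k = -1"
  proof (intro allI impI)
    fix k assume k: "t0 < k \<and> k \<le> t1"
    show "p k = -1"
    proof (cases "k = t1")
      case True then show ?thesis using pt1 by simp
    next
      case False
      show ?thesis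
      proof (rule ccontr)
        assume "p k \<noteq> -1"
        then have "p k = 1" using valid_vals[OF v] by force
        moreover have "k < t1" using k False by simp
        ultimately have "k \<in> ?T0" by simp
        then show False using t0max[of k] k by simp
      qed
    qed
  qed
  have ht1: "height p t1 = height p t0 - int (t1 - t0)"
    using height_run'[OF dn, of t1] t0lt by simp
  have hi0: "height p (i0 - 1) = height p t1 + int (i0 - 1 - t1)"
    using height_run'[OF up, of "i0 - 1"] t1lt by simp
  have hle: "height p (i0 - 1) \<le> height p t0"
  proof (cases "t0 = 0")
    case True then show ?thesis using bal i0n by simp
  next
    case False
    then have pt0: "p t0 = 1" using t0T by simp
    have pt01: "p (t0 + 1) = -1" using dn t0lt by simp
    have "2 \<le> t0 + 1" "t0 + 1 \<le> n" "p (t0 + 1 - 1) = 1" using False t0lt t1lt i0n pt0 by auto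
    have "ee n p (t0 + 1)"
    proof (rule ccontr)
      assume "\<not> ee n p (t0 + 1)"
      then have "t0 + 1 \<in> ?V" using \<open>2 \<le> t0 + 1\<close> \<open>t0 + 1 \<le> n\<close> \<open>p (t0 + 1 - 1) = 1\<close> pt01 by blast
      then have "i0 \<le> t0 + 1" by (rule minV)
      then show False using t0lt t1lt by simp
    qed
    moreover have "t0 + 1 \<le> i0 - 1" "i0 - 1 \<le> n" using t0lt t1lt i0n by auto
    ultimately have "height p (i0 - 1) < height p (t0 + 1 - 1)" unfolding eastern_exposed_def by blast
    then show ?thesis by simp
  qed
  define b where "b = i0 - 1 - t1"
  have b1: "1 \<le> b" using t1lt unfolding b_def by simp
  have ab: "b \<le> t1 - t0" using hle ht1 hi0 t0lt t1lt unfolding b_def by simp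
  define i where "i = i0 - 2 * b"
  have i1: "1 \<le> i" and ii0: "i + 2 * b = i0" and iim: "i + b = t1 + 1" and it0: "t0 < i"
    using ab b1 t1lt t0lt unfolding i_def b_def by auto
  let ?q = "p(i + b := -1, i + 2 * b := 1)"
  have "pat2 ?q i b" unfolding pat2_def
  proof (intro conjI allI impI)
    fix k assume k: "i \<le> k \<and> k \<le> i + b"
    show "?q k = -1"
    proof (cases "k = i + b")
      case False
      then have "t0 < k \<and> k \<le> t1" "k \<noteq> i + 2 * b" using k iim it0 b1 by auto
      then show ?thesis using dn by auto
    qed (use b1 in simp)
  next
    fix k assume k: "i + b < k \<and> k \<le> i + 2 * b"
    show "?q k = 1"
    proof (cases "k = i + 2 * b")
      case False
      then have "t1 < k \<and> k \<le> i0 - 1" "k \<noteq> i + b" using k iim ii0 by auto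
      then show ?thesis using up by auto
    qed simp
  qed
  moreover have "p (i + b) = 1" using up iim t1lt by auto
  moreover have "p (i + 2 * b) = -1" using ii0 pi0 by simp
  moreover have "\<not> ee n p (i + 2 * b)" using ii0 nee by simp
  moreover have "i + 2 * b \<le> n" using ii0 i0n by simp
  ultimately show ?thesis using i1 b1 by blast
qed

lemma valid_upd2:
  assumes "valid n hn p" "1 \<le> a" "a \<le> n" "(\<forall>k\<le>n. height q k \<le> 0)" "height q n = hn"
    and "q = p(a := -1, b := 1)"
  shows "valid n hn q"
  using assms unfolding valid_def by auto

lemma valid_upd2':
  assumes "valid n hn p" "1 \<le> a" "a \<le> n" "(\<forall>k\<le>n. height q k \<le> 0)" "height q n = hn"
    and "q = p(b := 1, a := -1)"
  shows "valid n hn q"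
  using assms unfolding valid_def by auto

lemma mv_valid:
  assumes v: "valid n hn p" and mv: "mvrel n p q"
  shows "valid n hn q"
proof -
  obtain i m where im: "1 \<le> m" "1 \<le> i" "i + 2 * m \<le> n"
    and c: "(pat1 p i m \<and> q = p(i := -1, i + m := 1)) \<or> (pat2 p i m \<and> q = p(i + m := 1, i + 2 * m := -1))"
    using mv unfolding mvrel_def by blast
  have bal: "\<forall>k\<le>n. height p k \<le> 0" and hn: "height p n = hn" using v unfolding valid_def by auto
  show ?thesis
  proof (cases "pat1 p i m \<and> q = p(i := -1, i + m := 1)")
    case True
    then show ?thesis
      using mv1_props(2,3)[of p i m n q] im bal hn valid_upd2[OF v, of i q "i + m"] by auto
  next
    case False
    then have P: "pat2 p i m" and Q: "q = p(i + m := 1, i + 2 * m := -1)" using c by auto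
    show ?thesis
      using mv2_props(3,4)[OF P im(2) im(1) im(3) Q] bal hn valid_upd2'[OF v, of "i + 2 * m" q "i + m"] im Q by auto
  qed
qed

lemma W_le: assumes "valid n hn p" shows "W n p \<le> (\<Sum>k = 1..n. int k)"
  unfolding W_def
proof (rule sum_mono)
  fix k assume "k \<in> {1..n}"
  have "p k \<le> 1" using assms unfolding valid_def by (metis order.refl le_minus_one_simps(2) le_less_trans less_le)
  then show "int k * p k \<le> int k" by (simp add: mult_left_le)
qed

lemma desc:
  assumes "valid n hn p"
  shows "\<exists>c. (mvrel n)\<^sup>*\<^sup>* p c \<and> canon n c \<and> valid n hn c \<and> ee n c = ee n p"
  using assms
proof (induction "nat ((\<Sum>k = 1..n. int k) - W n p)" arbitrary: p rule: less_induct)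
  case less
  show ?case
  proof (cases "canon n p")
    case True then show ?thesis using less.prems by blast
  next
    case False
    obtain i m where im: "1 \<le> m" "1 \<le> i" "i + 2 * m \<le> n" and P: "pat1 p i m"
      using desc_step[OF less.prems False] by blast
    define q where "q = p(i := -1, i + m := 1)"
    have mv: "mvrel n p q" unfolding mvrel_def q_def using im P by blast
    have vq: "valid n hn q" using mv_valid[OF less.prems mv] .
    have eq: "ee n q = ee n p" using mv1_props(1)[OF P im(2) im(1) im(3) q_def] by auto
    have Wq: "W n q = W n p + 2 * int m" using mv1_props(4)[OF P im(2) im(1) im(3) q_def] .
    have "nat ((\<Sum>k = 1..n. int k) - W n q) < nat ((\<Sum>k = 1..n. int k) - W n p)"
      using Wq W_le[OF vq] im by simp
    then obtain c where c: "(mvrel n)\<^sup>*\<^sup>* q c" "canon n c" "valid n hn c" "ee n c = ee n q"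
      using less.hyps vq by blast
    have "(mvrel n)\<^sup>*\<^sup>* p c" using converse_rtranclp_into_rtranclp[of "mvrel n", OF mv c(1)] .
    then show ?thesis using c eq by auto
  qed
qed

lemma asc:
  assumes "valid n hn p"
  shows "\<exists>c. (mvrel n)\<^sup>*\<^sup>* c p \<and> canon n c \<and> valid n hn c \<and> ee n c = ee n p"
  using assms
proof (induction "nat ((\<Sum>k = 1..n. int k) - W n p)" arbitrary: p rule: less_induct)
  case less
  show ?case
  proof (cases "canon n p")
    case True then show ?thesis using less.prems by blast
  next
    case False
    obtain i m where im: "1 \<le> m" "1 \<le> i" "i + 2 * m \<le> n" and P: "pat2 (p(i + m := -1, i + 2 * m := 1)) i m"
      and ne: "\<not> ee n p (i + 2 * m)" and p1: "p (i + m) = 1" and p2: "p (i + 2 * m) = -1"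
      using asc_step[OF less.prems False] by blast
    define q where "q = p(i + m := -1, i + 2 * m := 1)"
    have pq: "p = q(i + m := 1, i + 2 * m := -1)" unfolding q_def using p1 p2 by auto
    have P': "pat2 q i m" using P unfolding q_def .
    have mv: "mvrel n q p" unfolding mvrel_def using im P' pq by blast
    note props = mv2_props[OF P' im(2) im(1) im(3) pq]
    have vp: "valid n hn p" by (rule less.prems)
    have vq: "valid n hn q"
    proof -
      have "\<forall>k\<le>n. height q k \<le> 0" using props(4) vp unfolding valid_def by blast
      moreover have "height q n = hn" using props(3) vp unfolding valid_def by simp
      ultimately show ?thesis using vp im unfolding valid_def q_def by auto
    qed
    have eq: "ee n q = ee n p"
    proof
      fix j
      have "\<not> ee n q i" using props(1)[of "i + 2 * m"] ne by simp
      then show "ee n q j = ee n p j" using props(1)[of j] props(2) im by (auto split: if_splits)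
    qed
    have Wq: "W n p = W n q - 2 * int m" using props(5) .
    have "nat ((\<Sum>k = 1..n. int k) - W n q) < nat ((\<Sum>k = 1..n. int k) - W n p)"
      using Wq W_le[OF vq] im by simp
    then obtain c where c: "(mvrel n)\<^sup>*\<^sup>* c q" "canon n c" "valid n hn c" "ee n c = ee n q"
      using less.hyps vq by blast
    have "(mvrel n)\<^sup>*\<^sup>* c p" using rtranclp.rtrancl_into_rtrancl[of "mvrel n", OF c(1) mv] .
    then show ?thesis using c eq by auto
  qed
qed

definition fM :: "nat \<Rightarrow> (nat \<Rightarrow> int) \<Rightarrow> nat \<Rightarrow> int" where
  "fM n p t = Max (height p ` {t..n})"

lemma fM_ge: "t \<le> k \<Longrightarrow> k \<le> n \<Longrightarrow> height p k \<le> fM n p t"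
  unfolding fM_def by (rule Max_ge) auto

lemma fM_le: "t \<le> n \<Longrightarrow> (\<And>k. t \<le> k \<Longrightarrow> k \<le> n \<Longrightarrow> height p k \<le> M) \<Longrightarrow> fM n p t \<le> M"
  unfolding fM_def by (subst Max_le_iff) auto

lemma fM_n: "fM n p n = height p n"
  unfolding fM_def by simp

lemma fM_step: assumes "1 \<le> t" "t \<le> n" shows "fM n p (t - 1) = max (height p (t - 1)) (fM n p t)"
proof -
  have "{t - 1..n} = insert (t - 1) {t..n}" using assms by auto
  then show ?thesis unfolding fM_def using assms by (simp add: Max_insert)
qed

lemma ee_fM:
  assumes v: "valid n hn p" and t: "1 \<le> t" "t \<le> n"
  shows "ee n p t \<longleftrightarrow> fM n p t < height p (t - 1)"
proof
  assume "ee n p t"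
  then have "\<And>k. t \<le> k \<Longrightarrow> k \<le> n \<Longrightarrow> height p k < height p (t - 1)" unfolding eastern_exposed_def by auto
  then show "fM n p t < height p (t - 1)" unfolding fM_def using t by (subst Max_less_iff) auto
next
  assume A: "fM n p t < height p (t - 1)"
  have lt: "height p k < height p (t - 1)" if "t \<le> k" "k \<le> n" for k
    using fM_ge[OF that, of p] A by simp
  have "p t \<noteq> 1"
  proof
    assume "p t = 1"
    then have "height p t = height p (t - 1) + 1" using height_Suc[of p "t - 1"] t by simp
    then show False using lt[of t] t by simp
  qed
  then have "p t = -1" using valid_vals[OF v] by blast
  then show "ee n p t" unfolding eastern_exposed_def using t lt by auto
qed

lemma fM_rec:
  assumes v: "valid n hn p" and t: "1 \<le> t" "t \<le> n"
  shows "fM n p (t - 1) = fM n p t + (if ee n p t then 1 else 0)"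
proof (cases "ee n p t")
  case True
  then have A: "fM n p t < height p (t - 1)" using ee_fM[OF v t] by simp
  have "p t = -1" using True unfolding eastern_exposed_def by simp
  then have "height p t = height p (t - 1) - 1" using height_Suc[of p "t - 1"] t by simp
  moreover have "height p t \<le> fM n p t" using fM_ge[of t t n p] t by simp
  ultimately show ?thesis using True A fM_step[OF t, of p] by simp
next
  case False
  then have "\<not> fM n p t < height p (t - 1)" using ee_fM[OF v t] by simp
  then show ?thesis using False fM_step[OF t, of p] by simp
qed

lemma fM_eq:
  assumes vp: "valid n hn p" and vq: "valid n hn q" and e: "ee n p = ee n q"
  shows "t \<le> n \<Longrightarrow> fM n p t = fM n q t"
proof -
  have "\<forall>t. n - t = d \<longrightarrow> t \<le> n \<longrightarrow> fM n p t = fM n q t" for d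
  proof (induction d)
    case 0
    show ?case
    proof (intro allI impI)
      fix t assume "n - t = 0" "t \<le> n"
      then have "t = n" by simp
      then show "fM n p t = fM n q t" using fM_n vp vq unfolding valid_def by simp
    qed
  next
    case (Suc d)
    show ?case
    proof (intro allI impI)
      fix t assume A: "n - t = Suc d" "t \<le> n"
      then have "n - (t + 1) = d" "t + 1 \<le> n" "1 \<le> t + 1" by auto
      then have IH: "fM n p (t + 1) = fM n q (t + 1)" using Suc.IH by blast
      have "fM n p (t + 1 - 1) = fM n q (t + 1 - 1)"
        using fM_rec[OF vp \<open>1 \<le> t + 1\<close> \<open>t + 1 \<le> n\<close>] fM_rec[OF vq \<open>1 \<le> t + 1\<close> \<open>t + 1 \<le> n\<close>] IH e by simp
      then show "fM n p t = fM n q t" by simp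
    qed
  qed
  then show "t \<le> n \<Longrightarrow> fM n p t = fM n q t" by blast
qed

lemma ee_fM_eq: assumes v: "valid n hn p" and s: "1 \<le> s" "s \<le> n" and e: "ee n p s"
  shows "fM n p (s - 1) = height p (s - 1)"
  using fM_step[OF s, of p] ee_fM[OF v s] e by simp

lemma canon_run:
  assumes v: "valid n hn p" and c: "canon n p" and pj: "p j = 1" and j1: "1 \<le> j" and en: "e \<le> n"
    and ne: "\<forall>k. j < k \<and> k \<le> e \<longrightarrow> \<not> ee n p k"
  shows "j + d \<le> e \<Longrightarrow> p (j + d) = 1"
proof (induction d)
  case 0 then show ?case using pj by simp
next
  case (Suc d)
  then have IH: "p (j + d) = 1" by simp
  show ?case
  proof (rule ccontr)
    assume "p (j + Suc d) \<noteq> 1"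
    then have m: "p (j + Suc d) = -1" using valid_vals[OF v] by blast
    have "2 \<le> j + Suc d" "j + Suc d \<le> n" "p (j + Suc d - 1) = 1" using j1 Suc.prems en IH by auto
    then have "ee n p (j + Suc d)" using c m unfolding canon_def by blast
    then show False using ne Suc.prems by auto
  qed
qed

lemma uniq_aux:
  assumes vp: "valid n hn p" and vq: "valid n hn q" and cp: "canon n p" and cq: "canon n q"
    and eeq: "ee n p = ee n q" and agree: "\<forall>k<j. p k = q k" and pj: "p j = 1" and qj: "q j = -1"
  shows False
proof -
  have j1: "1 \<le> j" and jn: "j \<le> n" using valid_vals[OF vq, of j] qj by auto
  let ?H = "height p (j - 1)"
  have hqH: "height q (j - 1) = ?H" by (rule height_eq_before) (use agree j1 in auto)
  have fMeq: "\<And>t. t \<le> n \<Longrightarrow> fM n p t = fM n q t" using fM_eq[OF vp vq eeq] by blast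
  define F where "F = fM n q j"
  have hpj: "height p j = ?H + 1" using height_Suc[of p "j - 1"] j1 pj by simp
  have FH: "?H + 1 \<le> F" using fM_ge[of j j n p] jn hpj fMeq[OF jn] unfolding F_def by simp
  have "j < n + 1 \<and> q (n + 1) = 1" using valid_out[OF vq, of "n+1"] jn by simp
  then obtain u where u: "j < u \<and> q u = 1" and um: "\<And>k. k < u \<Longrightarrow> \<not> (j < k \<and> q k = 1)"
    using obtain_least[of "\<lambda>k. j < k \<and> q k = 1" "n+1"] by blast
  have qdn: "\<forall>k. j - 1 < k \<and> k \<le> u - 1 \<longrightarrow> q k = -1"
  proof (intro allI impI)
    fix k assume k: "j - 1 < k \<and> k \<le> u - 1"
    show "q k = -1"
    proof (cases "k = j")
      case True then show ?thesis using qj by simp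
    next
      case False
      have "k < u" "j < k" using k u False by auto
      then have "q k \<noteq> 1" using um[of k] by auto
      then show ?thesis using valid_vals[OF vq] by blast
    qed
  qed
  have hq1: "height q k = ?H - int (k - (j - 1))" if "j - 1 \<le> k" "k \<le> u - 1" for k
    using height_run'[OF qdn that] hqH by simp
  have un: "u \<le> n"
  proof (rule ccontr)
    assume "\<not> u \<le> n"
    have "F \<le> ?H - 1" unfolding F_def
    proof (rule fM_le[OF jn])
      fix k assume "j \<le> k" "k \<le> n"
      then have "j - 1 \<le> k" "k \<le> u - 1" "1 \<le> k - (j - 1)" using \<open>\<not> u \<le> n\<close> j1 by auto
      then show "height q k \<le> ?H - 1" using hq1[of k] by simp
    qed
    then show False using FH by simp
  qed
  have "u < n + 1 \<and> (q (n+1) = -1 \<or> n < n + 1)" using un by simp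
  then obtain s where s: "u < s \<and> (q s = -1 \<or> n < s)" and sm: "\<And>k. k < s \<Longrightarrow> \<not> (u < k \<and> (q k = -1 \<or> n < k))"
    using obtain_least[of "\<lambda>k. u < k \<and> (q k = -1 \<or> n < k)" "n+1"] by blast
  have sn: "s \<le> n + 1" using sm[of "n+1"] un by force
  have qup: "\<forall>k. u - 1 < k \<and> k \<le> s - 1 \<longrightarrow> q k = 1"
  proof (intro allI impI)
    fix k assume k: "u - 1 < k \<and> k \<le> s - 1"
    show "q k = 1"
    proof (cases "k = u")
      case True then show ?thesis using u by simp
    next
      case False
      have "k < s" "u < k" using k u s False by auto
      then have "q k \<noteq> -1" using sm[of k] by auto
      then show ?thesis using valid_vals[OF vq] by force
    qed
  qed
  have hq2: "height q k = height q (u - 1) + int (k - (u - 1))" if "u - 1 \<le> k" "k \<le> s - 1" for k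
    using height_run'[OF qup that] by simp
  have "j - 1 \<le> u - 1" using u by auto
  then have hqu: "height q (u - 1) = ?H - int (u - j)" using hq1[of "u - 1"] u j1 by simp
  let ?G = "height q (s - 1)"
  have Fle: "F \<le> max (?H - 1) ?G" unfolding F_def
  proof (rule fM_le[OF jn])
    fix k assume k: "j \<le> k" "k \<le> n"
    show "height q k \<le> max (?H - 1) ?G"
    proof (cases "k \<le> u - 1")
      case True
      then have "j - 1 \<le> k" "1 \<le> k - (j - 1)" using k j1 by auto
      then have "height q k \<le> ?H - 1" using hq1[of k] True by simp
      then show ?thesis by simp
    next
      case F1: False
      show ?thesis
      proof (cases "k \<le> s - 1")
        case True
        have "height q k \<le> ?G" using hq2[of k] hq2[of "s - 1"] True F1 u s by simp
        then show ?thesis by simp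
      next
        case False
        then have sn': "s \<le> n" and qs: "q s = -1" using k s by auto
        have qs1: "q (s - 1) = 1" using qup u s by auto
        have "2 \<le> s" "s \<le> n" "q (s - 1) = 1" using s u j1 sn' qs1 by auto
        then have "ee n q s" using cq qs unfolding canon_def by blast
        then have "height q k < ?G" using k False unfolding eastern_exposed_def by auto
        then show ?thesis by simp
      qed
    qed
  qed
  have s1n: "s - 1 \<le> n" "j \<le> s - 1" using sn s u by auto
  have FG: "F = ?G"
  proof -
    have "?G \<le> F" unfolding F_def using fM_ge[of j "s - 1" n q] s1n by simp
    then show ?thesis using Fle FH by simp
  qed
  have noee: "\<forall>k. j < k \<and> k \<le> s - 1 \<longrightarrow> \<not> ee n p k"
  proof (intro allI impI notI)
    fix k assume k: "j < k \<and> k \<le> s - 1" and E: "ee n p k"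
    then have Eq: "ee n q k" using eeq by simp
    show False
    proof (cases "k \<le> u - 1")
      case True
      have "k \<le> s - 1" "s - 1 \<le> n" using k s1n by auto
      then have "?G < height q (k - 1)" using Eq k unfolding eastern_exposed_def by auto
      moreover have "j - 1 \<le> k - 1" "k - 1 \<le> u - 1" using True k by auto
      then have "height q (k - 1) = ?H - int (k - 1 - (j - 1))" using hq1[of "k - 1"] by simp
      ultimately show False using FG FH by simp
    next
      case False
      then have "q k = 1" using qup k by auto
      then show False using Eq unfolding eastern_exposed_def by simp
    qed
  qed
  have prun: "\<forall>k. j - 1 < k \<and> k \<le> s - 1 \<longrightarrow> p k = 1"
  proof (intro allI impI)
    fix k assume k: "j - 1 < k \<and> k \<le> s - 1"
    then have "j + (k - j) \<le> s - 1" by auto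
    then have "p (j + (k - j)) = 1" using canon_run[OF vp cp pj j1 s1n(1) noee] by blast
    moreover have "j + (k - j) = k" using k j1 by auto
    ultimately show "p k = 1" by simp
  qed
  have hps: "height p (s - 1) = ?H + int (s - 1 - (j - 1))"
    using height_run'[OF prun, of "s - 1"] s1n by simp
  have heq: "height p (s - 1) = ?G"
  proof (cases "s \<le> n")
    case True
    then have qs: "q s = -1" using s by auto
    have qs1: "q (s - 1) = 1" using qup u s by auto
    have "2 \<le> s" "s \<le> n" "q (s - 1) = 1" using s u j1 True qs1 by auto
    then have Eq: "ee n q s" using cq qs unfolding canon_def by blast
    then have Ep: "ee n p s" using eeq by simp
    have s1: "1 \<le> s" using s u by auto
    show ?thesis using ee_fM_eq[OF vp s1 True Ep] ee_fM_eq[OF vq s1 True Eq] fMeq[of "s - 1"] s1n by simp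
  next
    case False
    then have "s - 1 = n" using sn by simp
    then show ?thesis using vp vq unfolding valid_def by simp
  qed
  have "u - 1 \<le> s - 1" using s by auto
  then have "?G = ?H - int (u - j) + int (s - 1 - (u - 1))" using hq2[of "s - 1"] hqu by simp
  then show False using heq hps u s j1 by simp
qed

lemma uniq:
  assumes vp: "valid n hn p" and vq: "valid n hn q" and cp: "canon n p" and cq: "canon n q"
    and eeq: "ee n p = ee n q"
  shows "p = q"
proof (rule ccontr)
  assume "p \<noteq> q"
  then obtain k where "p k \<noteq> q k" by auto
  then obtain j where j: "p j \<noteq> q j" and jm: "\<And>k. k < j \<Longrightarrow> \<not> p k \<noteq> q k"
    using obtain_least[of "\<lambda>k. p k \<noteq> q k"] by blast
  have agree: "\<forall>k<j. p k = q k" using jm by blast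
  have "(p j = 1 \<and> q j = -1) \<or> (p j = -1 \<and> q j = 1)"
    using j valid_vals[OF vp, of j] valid_vals[OF vq, of j] by force
  then show False
  proof
    assume "p j = 1 \<and> q j = -1"
    then show False using uniq_aux[OF vp vq cp cq eeq agree] by blast
  next
    assume "p j = -1 \<and> q j = 1"
    moreover have "\<forall>k<j. q k = p k" using agree by simp
    ultimately show False using uniq_aux[OF vq vp cq cp eeq[symmetric]] by blast
  qed
qed

lemma connect:
  assumes vp: "valid n hn p" and vq: "valid n hn q" and eeq: "ee n p = ee n q"
  shows "(mvrel n)\<^sup>*\<^sup>* p q"
proof -
  obtain c where c: "(mvrel n)\<^sup>*\<^sup>* p c" "canon n c" "valid n hn c" "ee n c = ee n p"
    using desc[OF vp] by blast
  obtain d where d: "(mvrel n)\<^sup>*\<^sup>* d q" "canon n d" "valid n hn d" "ee n d = ee n q"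
    using asc[OF vq] by blast
  have "c = d" using uniq[OF c(3) d(3) c(2) d(2)] c(4) d(4) eeq by simp
  then show ?thesis using c(1) d(1) by simp
qed

abbreviation ins_step :: "nat list list \<Rightarrow> nat \<Rightarrow> nat list list" where
  "ins_step \<equiv> (\<lambda>P x. row_insert x P)"

definition mk :: "nat list \<Rightarrow> nat list \<Rightarrow> nat list list" where
  "mk r R = (if R = [] then [r] else [r, R])"

lemma ins_app: "(\<forall>y\<in>set r. y \<le> x) \<Longrightarrow> row_insert x (r # rs) = (r @ [x]) # rs"
  by simp

lemma ins_split:
  assumes "\<forall>y\<in>set L. y < x" "H \<noteq> []" "\<forall>y\<in>set H. x < y"
  shows "row_insert x ((L @ H) # rs) = (L @ x # tl H) # row_insert (hd H) rs"
proof -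
  obtain h H' where H: "H = h # H'" using assms(2) by (cases H) auto
  have hx: "x < h" using assms(3) H by simp
  have nall: "\<not> (\<forall>y\<in>set (L @ H). y \<le> x)" using hx H by auto
  have tw: "takeWhile (\<lambda>y. y \<le> x) (L @ H) = L"
    using assms(1) hx H by (simp add: takeWhile_append2 less_imp_le)
  have dw: "dropWhile (\<lambda>y. y \<le> x) (L @ H) = H"
    using assms(1) hx H by (simp add: dropWhile_append2 less_imp_le)
  show ?thesis using nall tw dw by (simp only: row_insert.simps if_False) 
qed

lemma ins_second:
  assumes "\<forall>y\<in>set R. y < z"
  shows "row_insert z (if R = [] then [] else [R]) = [R @ [z]]"
  using assms by (cases "R = []") (auto simp: less_imp_le)

lemma mk_split:
  assumes "\<forall>y\<in>set L. y < x" "H \<noteq> []" "\<forall>y\<in>set H. x < y" "\<forall>y\<in>set R. y < hd H"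
  shows "row_insert x (mk (L @ H) R) = mk (L @ x # tl H) (R @ [hd H])"
proof -
  have "mk (L @ H) R = (L @ H) # (if R = [] then [] else [R])" unfolding mk_def by simp
  then show ?thesis using ins_split[OF assms(1-3)] ins_second[OF assms(4)] unfolding mk_def by simp
qed

lemma mk_app:
  assumes "\<forall>y\<in>set r. y \<le> x"
  shows "row_insert x (mk r R) = mk (r @ [x]) R"
  using assms unfolding mk_def by auto

lemma ins_explicit:
  assumes "sorted_wrt (<) bs" "\<forall>y\<in>set L. \<forall>b\<in>set bs. y < b" "\<forall>b\<in>set bs. \<forall>h\<in>set H. b < h"
    "length bs \<le> length H" "sorted_wrt (<) H" "\<forall>y\<in>set R. \<forall>h\<in>set H. y < h"
  shows "foldl ins_step (mk (L @ H) R) bs = mk (L @ bs @ drop (length bs) H) (R @ take (length bs) H)"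
  using assms
proof (induction bs arbitrary: L H R)
  case Nil then show ?case by simp
next
  case (Cons b bs)
  obtain h H' where H: "H = h # H'" using Cons.prems(4) by (cases H) auto
  have step: "row_insert b (mk (L @ H) R) = mk (L @ b # H') (R @ [h])"
    using mk_split[of L b H R] Cons.prems H by auto
  have IH: "foldl ins_step (mk ((L @ [b]) @ H') (R @ [h])) bs
      = mk ((L @ [b]) @ bs @ drop (length bs) H') ((R @ [h]) @ take (length bs) H')"
  proof (rule Cons.IH)
    show "sorted_wrt (<) bs" using Cons.prems(1) by simp
    show "\<forall>y\<in>set (L @ [b]). \<forall>c\<in>set bs. y < c" using Cons.prems(1,2) by auto
    show "\<forall>c\<in>set bs. \<forall>h\<in>set H'. c < h" using Cons.prems(3) H by auto
    show "length bs \<le> length H'" using Cons.prems(4) H by simp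
    show "sorted_wrt (<) H'" using Cons.prems(5) H by simp
    show "\<forall>y\<in>set (R @ [h]). \<forall>h\<in>set H'. y < h" using Cons.prems(5,6) H by auto
  qed
  show ?case using step IH H by simp
qed

lemma foldl_sorted_single:
  assumes "sorted_wrt (<) (r @ A)"
  shows "foldl ins_step [r] A = [r @ A]"
  using assms
proof (induction A arbitrary: r)
  case Nil then show ?case by simp
next
  case (Cons a A)
  have "\<forall>y\<in>set r. y \<le> a" using Cons.prems by (auto simp: sorted_wrt_append less_imp_le)
  then have "row_insert a [r] = [r @ [a]]" by simp
  moreover have "foldl ins_step [r @ [a]] A = [(r @ [a]) @ A]" using Cons.IH Cons.prems by simp
  ultimately show ?case by simp
qed

lemma insertion_sorted:
  assumes "sorted_wrt (<) A" "A \<noteq> []"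
  shows "foldl ins_step [] A = [A]"
proof -
  obtain a A' where A: "A = a # A'" using assms(2) by (cases A) auto
  have "foldl ins_step [] A = foldl ins_step [[a]] A'" using A by simp
  also have "\<dots> = [[a] @ A']" by (rule foldl_sorted_single) (use assms A in simp)
  finally show ?thesis using A by simp
qed

lemma insertion_app:
  assumes "sorted_wrt (<) A" "A \<noteq> []"
  shows "insertion_tableau (A @ B) = foldl ins_step (mk A []) B"
  unfolding insertion_tableau_def using insertion_sorted[OF assms] by (simp add: mk_def)

lemma target_P2:
  assumes m1: "1 \<le> m"
  shows "insertion_tableau ([i + m + 1..<i + 2 * m + 1] @ [i..<i + m + 1])
     = [[i..<i + m + 1], [i + m + 1..<i + 2 * m + 1]]"
proof -
  let ?H = "[i + m + 1..<i + 2 * m + 1]"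
  have ne: "?H \<noteq> []" using m1 by simp
  have "insertion_tableau (?H @ [i..<i + m + 1]) = foldl ins_step (mk ?H []) [i..<i + m + 1]"
    by (rule insertion_app[OF sorted_wrt_upt ne])
  also have "[i..<i + m + 1] = [i..<i + m] @ [i + m]" by simp
  also have "foldl ins_step (mk ?H []) ([i..<i + m] @ [i + m])
      = row_insert (i + m) (foldl ins_step (mk ([] @ ?H) []) [i..<i + m])" by simp
  also have "foldl ins_step (mk ([] @ ?H) []) [i..<i + m]
      = mk ([] @ [i..<i + m] @ drop (length [i..<i + m]) ?H) ([] @ take (length [i..<i + m]) ?H)"
    by (rule ins_explicit) (auto simp del: upt_Suc)
  also have "\<dots> = mk [i..<i + m] ?H" by simp
  also have "row_insert (i + m) (mk [i..<i + m] ?H) = mk ([i..<i + m] @ [i + m]) ?H"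
    by (rule mk_app) auto
  finally show ?thesis using ne unfolding mk_def by simp
qed

lemma target_P1:
  assumes m1: "1 \<le> m"
  shows "insertion_tableau ((i # [i + m + 1..<i + 2 * m + 1]) @ [i + 1..<i + m + 1])
     = [[i..<i + m + 1], [i + m + 1..<i + 2 * m + 1]]"
proof -
  let ?H = "[i + m + 1..<i + 2 * m + 1]"
  have ne: "?H \<noteq> []" using m1 by simp
  have s: "sorted_wrt (<) (i # ?H)" by (simp del: upt_Suc)
  have E1: "insertion_tableau ((i # ?H) @ [i + 1..<i + m + 1]) = foldl ins_step (mk ([i] @ ?H) []) [i + 1..<i + m + 1]"
    using insertion_app[OF s] by simp
  have E2: "foldl ins_step (mk ([i] @ ?H) []) [i + 1..<i + m + 1]
      = mk ([i] @ [i + 1..<i + m + 1] @ drop (length [i + 1..<i + m + 1]) ?H) ([] @ take (length [i + 1..<i + m + 1]) ?H)"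
    by (rule ins_explicit) (auto simp del: upt_Suc)
  have "insertion_tableau ((i # ?H) @ [i + 1..<i + m + 1]) = mk (i # [i + 1..<i + m + 1]) ?H"
    using E1 E2 by (simp del: upt_Suc)
  moreover have "i # [i + 1..<i + m + 1] = [i..<i + m + 1]" by (simp add: upt_rec)
  ultimately show ?thesis using ne unfolding mk_def by simp
qed

declare upt_Suc[simp del]

definition Inv :: "nat list \<Rightarrow> nat \<Rightarrow> nat list \<Rightarrow> nat list \<Rightarrow> bool" where
  "Inv A b r1 R \<longleftrightarrow> sorted_wrt (<) r1 \<and> (\<forall>x\<in>set R. \<forall>z\<in>set r1. b < z \<longrightarrow> x < z) \<and>
     (\<forall>z\<in>set r1. b < z \<longrightarrow> z \<in> set A) \<and> set R \<subseteq> set A \<and> (\<forall>z\<in>set r1. z \<in> set A \<or> z \<le> b)"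

lemma inv_step:
  assumes I: "Inv A b r1 R" and bx: "b < x" and xA: "x \<notin> set A"
  shows "\<exists>r1' R'. row_insert x (mk r1 R) = mk r1' R' \<and> Inv A x r1' R' \<and> length r1 \<le> length r1' \<and> (\<exists>e. R' = R @ e)"
proof -
  have sr: "sorted_wrt (<) r1" and c2: "\<forall>y\<in>set R. \<forall>z\<in>set r1. b < z \<longrightarrow> y < z"
    and c3: "\<forall>z\<in>set r1. b < z \<longrightarrow> z \<in> set A" and c4: "set R \<subseteq> set A"
    and c5: "\<forall>z\<in>set r1. z \<in> set A \<or> z \<le> b" using I unfolding Inv_def by auto
  have xr: "x \<notin> set r1" using c5 xA bx by auto
  show ?thesis
  proof (cases "\<forall>y\<in>set r1. y \<le> x")
    case True
    have "row_insert x (mk r1 R) = mk (r1 @ [x]) R" by (rule mk_app[OF True])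
    moreover have "Inv A x (r1 @ [x]) R"
    proof -
      have lt: "\<forall>y\<in>set r1. y < x" using True xr by (metis le_neq_implies_less)
      have "sorted_wrt (<) (r1 @ [x])" using sr lt by (simp add: sorted_wrt_append)
      then show ?thesis unfolding Inv_def using c4 c5 lt bx by auto
    qed
    ultimately show ?thesis by fastforce
  next
    case False
    define L where "L = takeWhile (\<lambda>y. y \<le> x) r1"
    define H where "H = dropWhile (\<lambda>y. y \<le> x) r1"
    have r1LH: "r1 = L @ H" unfolding L_def H_def by simp
    have Hne: "H \<noteq> []" unfolding H_def using False by (simp add: dropWhile_eq_Nil_conv)
    have hdH: "x < hd H" unfolding H_def using hd_dropWhile[of "\<lambda>y. y \<le> x" r1] Hne H_def by simp
    have sL: "sorted_wrt (<) L" and sH: "sorted_wrt (<) H" and LH: "\<forall>y\<in>set L. \<forall>z\<in>set H. y < z"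
      using sr r1LH by (auto simp: sorted_wrt_append)
    obtain h H' where HH: "H = h # H'" using Hne by (cases H) auto
    have Hx: "\<forall>y\<in>set H. x < y" using hdH sH HH by auto
    have Lx: "\<forall>y\<in>set L. y < x"
    proof
      fix y assume "y \<in> set L"
      then have "y \<le> x" "y \<in> set r1" unfolding L_def using set_takeWhileD by fastforce+
      then show "y < x" using xr by (metis le_neq_implies_less)
    qed
    have hr1: "h \<in> set r1" using r1LH HH by simp
    have Rh: "\<forall>y\<in>set R. y < hd H" using c2 hr1 hdH bx HH by auto
    have step: "row_insert x (mk (L @ H) R) = mk (L @ x # tl H) (R @ [hd H])"
      by (rule mk_split[OF Lx Hne Hx Rh])
    have "Inv A x (L @ x # H') (R @ [h])" unfolding Inv_def
    proof (intro conjI ballI impI)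
      show "sorted_wrt (<) (L @ x # H')" using sL sH Lx Hx HH by (auto simp: sorted_wrt_append intro: less_trans)
    next
      fix y z assume y: "y \<in> set (R @ [h])" and z: "z \<in> set (L @ x # H')" and xz: "x < z"
      then have zH': "z \<in> set H'" using Lx by auto
      then have zr: "z \<in> set r1" using r1LH HH by simp
      show "y < z"
      proof (cases "y \<in> set R")
        case True then show ?thesis using c2 zr xz bx by auto
      next
        case False then have "y = h" using y by simp
        then show ?thesis using sH HH zH' by simp
      qed
    next
      fix z assume z: "z \<in> set (L @ x # H')" and xz: "x < z"
      then have "z \<in> set H'" using Lx by auto
      then have "z \<in> set r1" using r1LH HH by simp
      then show "z \<in> set A" using c3 xz bx by auto
    next
      show "set (R @ [h]) \<subseteq> set A" using c4 c3 hr1 hdH bx HH by auto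
    next
      fix z assume z: "z \<in> set (L @ x # H')"
      show "z \<in> set A \<or> z \<le> x"
      proof (cases "z = x")
        case False
        then have "z \<in> set r1" using z r1LH HH by auto
        then show ?thesis using c5 bx by auto
      qed simp
    qed
    moreover have "length r1 \<le> length (L @ x # H')" using r1LH HH by simp
    ultimately show ?thesis using step r1LH HH by fastforce
  qed
qed

lemma inv_foldl:
  assumes "Inv A b r1 R" "sorted_wrt (<) bs" "\<forall>x\<in>set bs. b < x \<and> x \<notin> set A"
  shows "\<exists>r1' R'. foldl ins_step (mk r1 R) bs = mk r1' R' \<and> length r1 \<le> length r1' \<and> set R' \<subseteq> set A \<and> (\<exists>e. R' = R @ e)"
  using assms
proof (induction bs arbitrary: b r1 R)
  case Nil
  have "set R \<subseteq> set A" using Nil.prems(1) unfolding Inv_def by simp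
  then show ?case by (intro exI[of _ r1] exI[of _ R]) auto
next
  case (Cons x bs)
  obtain r1' R' where s: "row_insert x (mk r1 R) = mk r1' R'" "Inv A x r1' R'" "length r1 \<le> length r1'" "\<exists>e. R' = R @ e"
    using inv_step[OF Cons.prems(1), of x] Cons.prems(3) by auto
  have "\<exists>r1'' R''. foldl ins_step (mk r1' R') bs = mk r1'' R'' \<and> length r1' \<le> length r1'' \<and> set R'' \<subseteq> set A \<and> (\<exists>e. R'' = R' @ e)"
    by (rule Cons.IH[OF s(2)]) (use Cons.prems(2,3) in auto)
  then show ?case using s by fastforce
qed

lemma mk_eq2: "mk r R = [X, Y] \<Longrightarrow> r = X \<and> R = Y"
  unfolding mk_def by (auto split: if_splits)

lemma ins_converse:
  assumes sA: "sorted_wrt (<) A" and sB: "sorted_wrt (<) B" and disj: "set A \<inter> set B = {}"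
    and un: "set A \<union> set B = {i..i + 2 * m}" and m1: "1 \<le> m" and i1: "1 \<le> i"
    and eqT: "insertion_tableau (A @ B) = [[i..<i + m + 1], [i + m + 1..<i + 2 * m + 1]]"
  shows "set A = insert i {i + m + 1..i + 2 * m} \<or> set A = {i + m + 1..i + 2 * m}"
proof -
  let ?Y = "[i + m + 1..<i + 2 * m + 1]"
  have Ane: "A \<noteq> []"
  proof
    assume "A = []"
    then have "B \<noteq> []" using un by auto
    then have "insertion_tableau (A @ B) = [B]" using \<open>A = []\<close> insertion_sorted[OF sB] unfolding insertion_tableau_def by simp
    then show False using eqT by simp
  qed
  have E: "foldl ins_step (mk A []) B = [[i..<i + m + 1], ?Y]" using insertion_app[OF sA Ane] eqT by simp
  have I0: "Inv A 0 A []" unfolding Inv_def using sA by auto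
  have Bgt: "\<forall>x\<in>set B. 0 < x \<and> x \<notin> set A" using un disj i1 by auto
  obtain r1' R' where F: "foldl ins_step (mk A []) B = mk r1' R'" "length A \<le> length r1'" "set R' \<subseteq> set A"
    using inv_foldl[OF I0 sB Bgt] by blast
  have "mk r1' R' = [[i..<i + m + 1], ?Y]" using F(1) E by simp
  then have r1'eq: "r1' = [i..<i + m + 1]" and R'eq: "R' = ?Y" using mk_eq2[of r1' R'] by auto
  have YA: "{i + m + 1..i + 2 * m} \<subseteq> set A" using F(3) R'eq by auto
  have lenA: "length A \<le> m + 1" using F(2) r1'eq by simp
  have dA: "distinct A" using sA by (simp add: strict_sorted_iff)
  show ?thesis
  proof (cases "i \<in> set A")
    case True
    let ?X = "insert i {i + m + 1..i + 2 * m}"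
    have sub: "?X \<subseteq> set A" using YA True by simp
    have cX: "card ?X = m + 1" using m1 by simp
    have "card (set A) \<le> card ?X" using lenA cX distinct_card[OF dA] by simp
    then have "?X = set A" using card_seteq[OF _ sub] by simp
    then show ?thesis by simp
  next
    case False
    have "set A \<subseteq> {i + m + 1..i + 2 * m}"
    proof
      fix a assume aA: "a \<in> set A"
      show "a \<in> {i + m + 1..i + 2 * m}"
      proof (rule ccontr)
        assume na: "a \<notin> {i + m + 1..i + 2 * m}"
        have aI: "a \<in> {i..i + 2 * m}" using un aA by auto
        have ai: "a \<noteq> i" using False aA by auto
        have ale: "a \<le> i + m" using aI na by auto
        obtain h A' where AA: "A = h # A'" using Ane by (cases A) auto
        have hle: "h \<le> a" using aA sA AA by (auto simp: less_imp_le)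
        have iB: "i \<in> set B" using un False by auto
        obtain b B' where BB: "B = b # B'" using iB by (cases B) auto
        have bi: "b = i"
        proof (rule ccontr)
          assume "b \<noteq> i"
          then have "i \<in> set B'" using iB BB by simp
          then have "b < i" using sB BB by simp
          moreover have "i \<le> b" using un BB by auto
          ultimately show False by simp
        qed
        have Agt: "\<forall>y\<in>set A. i < y"
        proof
          fix y assume "y \<in> set A"
          then have "y \<in> {i..i + 2 * m}" "y \<noteq> i" using un False by auto
          then show "i < y" by simp
        qed
        have step: "row_insert i (mk ([] @ A) []) = mk ([] @ i # tl A) ([] @ [hd A])"
          by (rule mk_split) (use Ane Agt in auto)
        have I1: "Inv A i (i # A') [h]" unfolding Inv_def using sA AA Agt by auto
        have B'gt: "\<forall>x\<in>set B'. i < x \<and> x \<notin> set A" using sB BB bi disj by auto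
        obtain r1'' R'' where G: "foldl ins_step (mk (i # A') [h]) B' = mk r1'' R''" "\<exists>e. R'' = [h] @ e"
          using inv_foldl[OF I1 _ B'gt] sB BB by auto
        have "foldl ins_step (mk A []) B = foldl ins_step (mk (i # A') [h]) B'"
          using step AA BB bi by simp
        then have "mk r1'' R'' = [[i..<i + m + 1], ?Y]" using G(1) E by simp
        then have "R'' = ?Y" using mk_eq2[of r1'' R''] by auto
        then have "h = i + m + 1" using G(2) m1 by (auto simp: upt_rec)
        then show False using hle ale by simp
      qed
    qed
    then show ?thesis using YA by auto
  qed
qed

declare upt_Suc[simp del]

lemma sorted_unique:
  fixes xs ys :: "nat list"
  assumes "sorted_wrt (<) xs" "sorted_wrt (<) ys" "set xs = set ys" shows "xs = ys"
proof -
  have "sorted xs" "distinct xs" "sorted ys" "distinct ys" using assms(1,2) by (simp_all add: strict_sorted_iff)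
  then show ?thesis using sorted_distinct_set_unique assms(3) by blast
qed

lemma set_filter_upt: "set (filter P [1..<n + 1]) = {k. 1 \<le> k \<and> k \<le> n \<and> P k}"
  by auto

lemma sorted_cnt:
  fixes r :: "nat list"
  assumes s: "sorted_wrt (<) r" and j: "j < length r"
  shows "r ! j \<le> k \<longleftrightarrow> j < card {x \<in> set r. x \<le> k}"
proof
  assume A: "r ! j \<le> k"
  have sub: "set (take (Suc j) r) \<subseteq> {x \<in> set r. x \<le> k}"
  proof
    fix x assume "x \<in> set (take (Suc j) r)"
    then obtain i where i: "i < length (take (Suc j) r)" "x = take (Suc j) r ! i" by (auto simp: in_set_conv_nth)
    then have ij: "i \<le> j" and x: "x = r ! i" using j by auto
    have "r ! i \<le> r ! j" using ij s j by (cases "i = j") (auto simp: sorted_wrt_nth_less less_imp_le)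
    then show "x \<in> {x \<in> set r. x \<le> k}" using x A ij j by auto
  qed
  moreover have "card (set (take (Suc j) r)) = Suc j"
    using s j by (simp add: distinct_card strict_sorted_iff)
  moreover have "card (set (take (Suc j) r)) \<le> card {x \<in> set r. x \<le> k}"
    by (rule card_mono[OF _ sub]) simp
  ultimately have "Suc j \<le> card {x \<in> set r. x \<le> k}" by simp
  then show "j < card {x \<in> set r. x \<le> k}" by simp
next
  assume A: "j < card {x \<in> set r. x \<le> k}"
  show "r ! j \<le> k"
  proof (rule ccontr)
    assume "\<not> r ! j \<le> k"
    have "{x \<in> set r. x \<le> k} \<subseteq> set (take j r)"
    proof
      fix x assume x: "x \<in> {x \<in> set r. x \<le> k}"
      then obtain i where i: "i < length r" "x = r ! i" by (auto simp: in_set_conv_nth)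
      have "i < j"
      proof (rule ccontr)
        assume "\<not> i < j"
        then have "r ! j \<le> r ! i" using s i j by (cases "i = j") (auto simp: sorted_wrt_nth_less less_imp_le)
        then show False using x i \<open>\<not> r ! j \<le> k\<close> by auto
      qed
      then show "x \<in> set (take j r)" using i by (auto simp: in_set_conv_nth)
    qed
    then have "card {x \<in> set r. x \<le> k} \<le> card (set (take j r))" by (simp add: card_mono)
    also have "\<dots> \<le> j" using card_length[of "take j r"] by simp
    finally show False using A by simp
  qed
qed

lemma height_count:
  assumes "\<forall>x. 1 \<le> x \<and> x \<le> k \<longrightarrow> p x = 1 \<or> p x = -1"
  shows "height p k = int (card {x \<in> {1..k}. p x = 1}) - int (card {x \<in> {1..k}. p x = -1})"
  using assms
proof (induction k)
  case 0 then show ?case by simp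
next
  case (Suc k)
  have IH: "height p k = int (card {x \<in> {1..k}. p x = 1}) - int (card {x \<in> {1..k}. p x = -1})"
    using Suc by simp
  have S: "{x \<in> {1..Suc k}. P x} = (if P (Suc k) then insert (Suc k) {x \<in> {1..k}. P x} else {x \<in> {1..k}. P x})" for P
    by (auto simp: le_Suc_eq)
  have "p (Suc k) = 1 \<or> p (Suc k) = -1" using Suc.prems by simp
  then show ?case using IH S[of "\<lambda>x. p x = 1"] S[of "\<lambda>x. p x = -1"] by (auto simp: height_Suc)
qed

definition tab_of :: "nat \<Rightarrow> (nat \<Rightarrow> int) \<Rightarrow> tab" where
  "tab_of n p = (filter (\<lambda>k. p k = -1) [1..<n + 1], filter (\<lambda>k. p k = 1) [1..<n + 1])"

lemma SYT_facts:
  assumes "(r1, r2) \<in> SYT l1 l2"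
  shows "length r1 = l1" "length r2 = l2" "sorted_wrt (<) r1" "sorted_wrt (<) r2"
    "set r1 \<union> set r2 = {1..l1 + l2}" "\<forall>j<l2. r1 ! j < r2 ! j" "set r1 \<inter> set r2 = {}"
proof -
  show l: "length r1 = l1" "length r2 = l2" and s: "sorted_wrt (<) r1" "sorted_wrt (<) r2"
    and u: "set r1 \<union> set r2 = {1..l1 + l2}" and "\<forall>j<l2. r1 ! j < r2 ! j"
    using assms unfolding SYT_def by auto
  have c1: "card (set r1) = l1" using l s by (simp add: distinct_card strict_sorted_iff)
  have c2: "card (set r2) = l2" using l s by (simp add: distinct_card strict_sorted_iff)
  have "card (set r1 \<union> set r2) + card (set r1 \<inter> set r2) = card (set r1) + card (set r2)"
    using card_Un_Int[of "set r1" "set r2"] by simp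
  then have "card (set r1 \<inter> set r2) = 0" using u c1 c2 by simp
  then show "set r1 \<inter> set r2 = {}" by simp
qed

lemma SYT_valid:
  assumes T: "T \<in> SYT l1 l2" and l: "l2 \<le> l1"
  shows "valid (l1 + l2) (int l2 - int l1) (path_of T)" and "tab_of (l1 + l2) (path_of T) = T"
proof -
  obtain r1 r2 where TT: "T = (r1, r2)" by (cases T)
  let ?n = "l1 + l2"
  note F = SYT_facts[OF T[unfolded TT]]
  let ?p = "path_of T"
  have p: "?p k = (if k \<in> set r1 then -1 else 1)" for k unfolding path_of_def TT by simp
  have sub: "set r1 \<subseteq> {1..?n}" "set r2 \<subseteq> {1..?n}" using F(5) by auto
  have vals: "\<forall>k. ?p k = 1 \<or> (1 \<le> k \<and> k \<le> ?n \<and> ?p k = -1)" using p sub by auto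
  have bot: "{x \<in> {1..k}. ?p x = -1} = {x \<in> set r1. x \<le> k}" if "k \<le> ?n" for k
    using p F(5) that by auto
  have top: "{x \<in> {1..k}. ?p x = 1} = {x \<in> set r2. x \<le> k}" if "k \<le> ?n" for k
    using p F(5) F(7) that by auto
  have hc: "height ?p k = int (card {x \<in> set r2. x \<le> k}) - int (card {x \<in> set r1. x \<le> k})" if "k \<le> ?n" for k
    using height_count[of k ?p] vals bot[OF that] top[OF that] by auto
  have bal: "height ?p k \<le> 0" if k: "k \<le> ?n" for k
  proof (rule ccontr)
    assume "\<not> height ?p k \<le> 0"
    then have lt: "card {x \<in> set r1. x \<le> k} < card {x \<in> set r2. x \<le> k}" using hc[OF k] by simp
    let ?j = "card {x \<in> set r1. x \<le> k}"
    have "card {x \<in> set r2. x \<le> k} \<le> card (set r2)" by (rule card_mono) auto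
    also have "\<dots> = l2" using F(2,4) by (simp add: distinct_card strict_sorted_iff)
    finally have jl2: "?j < l2" using lt by simp
    have "r2 ! ?j \<le> k" using sorted_cnt[OF F(4), of ?j k] lt jl2 F(2) by simp
    moreover have "\<not> r1 ! ?j \<le> k" using sorted_cnt[OF F(3), of ?j k] jl2 l F(1) by simp
    ultimately show False using F(6) jl2 by force
  qed
  have hn: "height ?p ?n = int l2 - int l1"
  proof -
    have "{x \<in> set r2. x \<le> ?n} = set r2" "{x \<in> set r1. x \<le> ?n} = set r1" using F(5) by auto
    then show ?thesis using hc[of ?n] F(1-4) by (simp add: distinct_card strict_sorted_iff)
  qed
  show "valid ?n (int l2 - int l1) ?p" unfolding valid_def using vals bal hn by auto
  have f1: "filter (\<lambda>k. ?p k = -1) [1..<?n + 1] = r1"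
  proof (rule sorted_unique)
    show "sorted_wrt (<) (filter (\<lambda>k. ?p k = -1) [1..<?n + 1])" by (rule sorted_wrt_filter) simp
    show "sorted_wrt (<) r1" by (rule F(3))
    show "set (filter (\<lambda>k. ?p k = -1) [1..<?n + 1]) = set r1" unfolding set_filter_upt using p sub by auto
  qed
  have f2: "filter (\<lambda>k. ?p k = 1) [1..<?n + 1] = r2"
  proof (rule sorted_unique)
    show "sorted_wrt (<) (filter (\<lambda>k. ?p k = 1) [1..<?n + 1])" by (rule sorted_wrt_filter) simp
    show "sorted_wrt (<) r2" by (rule F(4))
    show "set (filter (\<lambda>k. ?p k = 1) [1..<?n + 1]) = set r2" unfolding set_filter_upt using p sub F(5) F(7) by auto
  qed
  have "tab_of ?n ?p = (r1, r2)" unfolding tab_of_def using f1 f2 by simp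
  then show "tab_of ?n ?p = T" using TT by simp
qed

lemma valid_SYT:
  assumes v: "valid (l1 + l2) (int l2 - int l1) p" and l: "l2 \<le> l1"
  shows "tab_of (l1 + l2) p \<in> SYT l1 l2" and "path_of (tab_of (l1 + l2) p) = p"
proof -
  let ?n = "l1 + l2"
  define r1 where "r1 = filter (\<lambda>k. p k = -1) [1..<?n + 1]"
  define r2 where "r2 = filter (\<lambda>k. p k = 1) [1..<?n + 1]"
  have T: "tab_of ?n p = (r1, r2)" unfolding tab_of_def r1_def r2_def by simp
  have vals: "\<forall>k. p k = 1 \<or> (1 \<le> k \<and> k \<le> ?n \<and> p k = -1)" and bal: "\<forall>k\<le>?n. height p k \<le> 0"
    and hn: "height p ?n = int l2 - int l1" using v unfolding valid_def by auto
  have s1: "set r1 = {k. 1 \<le> k \<and> k \<le> ?n \<and> p k = -1}" unfolding r1_def set_filter_upt ..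
  have s2: "set r2 = {k. 1 \<le> k \<and> k \<le> ?n \<and> p k = 1}" unfolding r2_def set_filter_upt ..
  have so1: "sorted_wrt (<) r1" unfolding r1_def by (rule sorted_wrt_filter) simp
  have so2: "sorted_wrt (<) r2" unfolding r2_def by (rule sorted_wrt_filter) simp
  have len1: "length r1 = card (set r1)" using so1 by (simp add: distinct_card strict_sorted_iff)
  have len2: "length r2 = card (set r2)" using so2 by (simp add: distinct_card strict_sorted_iff)
  have vals': "\<forall>x. 1 \<le> x \<and> x \<le> k \<longrightarrow> p x = 1 \<or> p x = -1" for k using vals by auto
  have hc: "height p k = int (card {y \<in> set r2. y \<le> k}) - int (card {y \<in> set r1. y \<le> k})" if "k \<le> ?n" for k
  proof -
    have "{x \<in> {1..k}. p x = 1} = {y \<in> set r2. y \<le> k}" "{x \<in> {1..k}. p x = -1} = {y \<in> set r1. y \<le> k}"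
      using s1 s2 that by auto
    then show ?thesis using height_count[OF vals'[of k]] by simp
  qed
  have dis: "set r1 \<inter> set r2 = {}" using s1 s2 by auto
  have un: "set r1 \<union> set r2 = {1..?n}" using s1 s2 vals by auto
  have "card (set r1) + card (set r2) = ?n"
    using card_Un_disjoint[of "set r1" "set r2"] dis un by simp
  moreover have "int (card (set r2)) - int (card (set r1)) = int l2 - int l1"
  proof -
    have "{y \<in> set r2. y \<le> ?n} = set r2" "{y \<in> set r1. y \<le> ?n} = set r1" using s1 s2 by auto
    then show ?thesis using hc[of ?n] hn by simp
  qed
  ultimately have c1: "card (set r1) = l1" and c2: "card (set r2) = l2" by linarith+
  have ballot: "\<forall>j<l2. r1 ! j < r2 ! j"
  proof (intro allI impI)
    fix j assume j: "j < l2"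
    let ?x = "r2 ! j"
    have jr2: "j < length r2" using j len2 c2 by simp
    have xin: "?x \<in> set r2" using jr2 by simp
    then have xn: "?x \<le> ?n" and px: "p ?x = 1" using s2 by auto
    have c2x: "j < card {y \<in> set r2. y \<le> ?x}" using sorted_cnt[OF so2 jr2, of ?x] by simp
    have "height p ?x \<le> 0" using bal xn by simp
    then have "j < card {y \<in> set r1. y \<le> ?x}" using hc[OF xn] c2x by simp
    moreover have jr1: "j < length r1" using j l len1 c1 by simp
    ultimately have le: "r1 ! j \<le> ?x" using sorted_cnt[OF so1 jr1, of ?x] by simp
    have "r1 ! j \<in> set r1" using jr1 by simp
    then have "p (r1 ! j) = -1" using s1 by auto
    then have "r1 ! j \<noteq> ?x" using px by auto
    then show "r1 ! j < r2 ! j" using le by simp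
  qed
  show "tab_of ?n p \<in> SYT l1 l2" unfolding T SYT_def
    using len1 len2 c1 c2 so1 so2 un ballot by auto
  show "path_of (tab_of ?n p) = p"
  proof
    fix k
    have vk: "p k = 1 \<or> (1 \<le> k \<and> k \<le> ?n \<and> p k = -1)" using vals by blast
    show "path_of (tab_of ?n p) k = p k"
    proof (cases "p k = -1")
      case True
      then have "k \<in> set r1" using s1 vk by simp
      then show ?thesis unfolding T path_of_def using True by simp
    next
      case False
      then have "k \<notin> set r1" "p k = 1" using s1 vk by auto
      then show ?thesis unfolding T path_of_def by simp
    qed
  qed
qed

declare upt_Suc[simp del]

lemma card_less_perm:
  assumes d: "distinct u" and s: "set u = {1..length u}" and k: "k < length u"
  shows "u ! k = card {l. l < length u \<and> u ! l < u ! k} + 1"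
proof -
  have "{l. l < length u \<and> u ! l < u ! k} = {l. l < length u \<and> u ! l \<in> {1..<u ! k}}"
  proof -
    have "\<And>l. l < length u \<Longrightarrow> 1 \<le> u ! l" using s by (metis atLeastAtMost_iff nth_mem)
    then show ?thesis by auto
  qed
  moreover have "card {l. l < length u \<and> u ! l \<in> {1..<u ! k}} = card {1..<u ! k}"
  proof -
    have inj: "inj_on (nth u) {l. l < length u \<and> u ! l \<in> {1..<u ! k}}"
      using d by (auto simp: inj_on_def distinct_conv_nth)
    have img: "nth u ` {l. l < length u \<and> u ! l \<in> {1..<u ! k}} = {1..<u ! k}"
    proof
      show "nth u ` {l. l < length u \<and> u ! l \<in> {1..<u ! k}} \<subseteq> {1..<u ! k}" by auto
      show "{1..<u ! k} \<subseteq> nth u ` {l. l < length u \<and> u ! l \<in> {1..<u ! k}}"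
      proof
        fix x assume x: "x \<in> {1..<u ! k}"
        have "u ! k \<le> length u" using s k by (metis atLeastAtMost_iff nth_mem)
        then have "x \<in> set u" using s x by auto
        then obtain l where "l < length u" "u ! l = x" by (auto simp: in_set_conv_nth)
        then show "x \<in> nth u ` {l. l < length u \<and> u ! l \<in> {1..<u ! k}}" using x by auto
      qed
    qed
    show ?thesis using card_image[OF inj] img by simp
  qed
  moreover have "1 \<le> u ! k" using s k by (metis atLeastAtMost_iff nth_mem)
  ultimately show ?thesis by simp
qed

lemma std_perm:
  assumes d: "distinct u" and s: "set u = {1..length u}" and len: "length u = length v"
    and ord: "\<And>k l. k < length v \<Longrightarrow> l < length v \<Longrightarrow> (u ! l < u ! k \<longleftrightarrow> (v ! l < v ! k \<or> (v ! l = v ! k \<and> l < k)))"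
  shows "std v = u"
proof (rule nth_equalityI)
  show "length (std v) = length u" unfolding std_def using len by simp
  fix k assume "k < length (std v)"
  then have k: "k < length v" unfolding std_def by simp
  have "std v ! k = card {l. l < length v \<and> v ! l < v ! k} + card {l. l < k \<and> v ! l = v ! k} + 1"
    unfolding std_def using k by simp
  also have "card {l. l < length v \<and> v ! l < v ! k} + card {l. l < k \<and> v ! l = v ! k}
      = card {l. l < length v \<and> (v ! l < v ! k \<or> (v ! l = v ! k \<and> l < k))}"
  proof -
    have "{l. l < length v \<and> (v ! l < v ! k \<or> (v ! l = v ! k \<and> l < k))}
        = {l. l < length v \<and> v ! l < v ! k} \<union> {l. l < k \<and> v ! l = v ! k}" using k by auto
    moreover have "{l. l < length v \<and> v ! l < v ! k} \<inter> {l. l < k \<and> v ! l = v ! k} = {}" by auto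
    ultimately show ?thesis by (simp add: card_Un_disjoint)
  qed
  also have "{l. l < length v \<and> (v ! l < v ! k \<or> (v ! l = v ! k \<and> l < k))} = {l. l < length u \<and> u ! l < u ! k}"
    using ord[OF k] len by auto
  also have "card \<dots> + 1 = u ! k" using card_less_perm[OF d s] k len by simp
  finally show "std v ! k = u ! k" .
qed

lemma map_upd_distinct:
  assumes "distinct w" "q < length w"
  shows "(map f w)[q := c] = map (f(w ! q := c)) w"
proof (rule nth_equalityI)
  show "length ((map f w)[q := c]) = length (map (f(w ! q := c)) w)" by simp
  fix j assume "j < length ((map f w)[q := c])"
  then have j: "j < length w" by simp
  show "(map f w)[q := c] ! j = map (f(w ! q := c)) w ! j"
  proof (cases "j = q")
    case False
    then have "w ! j \<noteq> w ! q" using assms j by (simp add: nth_eq_iff_index_eq)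
    then show ?thesis using j False by simp
  qed (use j in simp)
qed

lemma unbr_skip:
  assumes "\<forall>x\<in>set xs. x \<noteq> i \<and> x \<noteq> Suc i"
  shows "unbr i k c (xs @ ys) = unbr i (k + length xs) c ys"
  using assms by (induction xs arbitrary: k) auto

lemma unbr_up: "unbr i k c (replicate m (Suc i) @ ys) = unbr i (k + m) (c + m) ys"
  by (induction m arbitrary: k c) auto

lemma unbr_down: "m \<le> c \<Longrightarrow> unbr i k c (replicate m i @ ys) = unbr i (k + m) (c - m) ys"
  by (induction m arbitrary: k c) (auto simp: Suc_diff_Suc)

lemma unbr_nil:
  assumes "\<forall>x\<in>set xs. x \<noteq> i \<and> x \<noteq> Suc i"
  shows "unbr i k c xs = []"
  using unbr_skip[OF assms, of k c "[]"] by simp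

lemma sorted_split:
  fixes r :: "nat list"
  assumes "sorted_wrt (<) r"
  shows "r = filter (\<lambda>x. x < a) r @ filter (\<lambda>x. \<not> x < a) r"
  using assms
proof (induction r)
  case Nil then show ?case by simp
next
  case (Cons x r)
  show ?case
  proof (cases "x < a")
    case True then show ?thesis using Cons by simp
  next
    case False
    then have "filter (\<lambda>x. x < a) r = []" "filter (\<lambda>x. \<not> x < a) r = r"
      using Cons.prems by (auto simp: filter_empty_conv filter_id_conv)
    then show ?thesis using False by simp
  qed
qed

lemma sorted_split3:
  fixes r :: "nat list"
  assumes s: "sorted_wrt (<) r" and ab: "a \<le> b"
  shows "r = filter (\<lambda>x. x < a) r @ filter (\<lambda>x. a \<le> x \<and> x \<le> b) r @ filter (\<lambda>x. b < x) r"
proof -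
  have 1: "r = filter (\<lambda>x. x < a) r @ filter (\<lambda>x. \<not> x < a) r" by (rule sorted_split[OF s])
  have s2: "sorted_wrt (<) (filter (\<lambda>x. \<not> x < a) r)" using s by (rule sorted_wrt_filter)
  have 2: "filter (\<lambda>x. \<not> x < a) r = filter (\<lambda>x. x < Suc b) (filter (\<lambda>x. \<not> x < a) r) @ filter (\<lambda>x. \<not> x < Suc b) (filter (\<lambda>x. \<not> x < a) r)"
    by (rule sorted_split[OF s2])
  have 3: "filter (\<lambda>x. x < Suc b) (filter (\<lambda>x. \<not> x < a) r) = filter (\<lambda>x. a \<le> x \<and> x \<le> b) r"
    unfolding filter_filter by (rule filter_cong) auto
  have 4: "filter (\<lambda>x. \<not> x < Suc b) (filter (\<lambda>x. \<not> x < a) r) = filter (\<lambda>x. b < x) r"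
    unfolding filter_filter by (rule filter_cong) (use ab in auto)
  show ?thesis using 1 2 3 4 by metis
qed

lemma sorted_nth_iff:
  fixes r :: "nat list"
  assumes "sorted_wrt (<) r" "a < length r" "b < length r"
  shows "a < b \<longleftrightarrow> r ! a < r ! b"
proof
  assume "a < b" then show "r ! a < r ! b" using assms sorted_wrt_nth_less by blast
next
  assume A: "r ! a < r ! b"
  show "a < b"
  proof (rule ccontr)
    assume "\<not> a < b"
    then have "b = a \<or> b < a" by auto
    then show False
    proof
      assume "b = a" then show False using A by simp
    next
      assume "b < a" then have "r ! b < r ! a" using assms sorted_wrt_nth_less by blast
      then show False using A by simp
    qed
  qed
qed

lemma pos_order:
  assumes T: "(r1, r2) \<in> SYT l1 l2" and l: "l < l1 + l2" and k: "k < l1 + l2"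
  shows "l < k \<longleftrightarrow> (((r2 @ r1) ! l \<in> set r2 \<and> (r2 @ r1) ! k \<notin> set r2) \<or>
           (((r2 @ r1) ! l \<in> set r2 \<longleftrightarrow> (r2 @ r1) ! k \<in> set r2) \<and> (r2 @ r1) ! l < (r2 @ r1) ! k))"
proof -
  have len1: "length r1 = l1" and len2: "length r2 = l2" and s1: "sorted_wrt (<) r1" and s2: "sorted_wrt (<) r2"
    using SYT_facts[OF T] by auto
  have dis': "set r1 \<inter> set r2 = {}" using SYT_facts[OF T] by simp
  note srt = sorted_nth_iff
  have w: "\<And>j. j < l1 + l2 \<Longrightarrow> (r2 @ r1) ! j = (if j < l2 then r2 ! j else r1 ! (j - l2))"
    using len2 by (simp add: nth_append)
  have inr2: "\<And>j. j < l1 + l2 \<Longrightarrow> ((r2 @ r1) ! j \<in> set r2 \<longleftrightarrow> j < l2)"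
  proof -
    fix j assume j: "j < l1 + l2"
    show "((r2 @ r1) ! j \<in> set r2 \<longleftrightarrow> j < l2)"
    proof (cases "j < l2")
      case True then show ?thesis using w[OF j] len2 by simp
    next
      case False
      then have "(r2 @ r1) ! j = r1 ! (j - l2)" "j - l2 < length r1" using w[OF j] j len1 by auto
      then have "(r2 @ r1) ! j \<in> set r1" by simp
      then show ?thesis using dis' False by auto
    qed
  qed
  show ?thesis
  proof (cases "l < l2")
    case True
    show ?thesis
    proof (cases "k < l2")
      case True
      then show ?thesis using \<open>l < l2\<close> inr2[OF l] inr2[OF k] w[OF l] w[OF k] srt[OF s2, of l k] len2 by simp
    next
      case False
      then show ?thesis using \<open>l < l2\<close> inr2[OF l] inr2[OF k] by simp
    qed
  next
    case False
    show ?thesis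
    proof (cases "k < l2")
      case True
      then show ?thesis using \<open>\<not> l < l2\<close> inr2[OF l] inr2[OF k] by simp
    next
      case False
      have "l - l2 < length r1" "k - l2 < length r1" using l k len1 \<open>\<not> l < l2\<close> False by auto
      then have "(l - l2 < k - l2) = (r1 ! (l - l2) < r1 ! (k - l2))" using srt[OF s1] by blast
      moreover have "(l < k) = (l - l2 < k - l2)" using \<open>\<not> l < l2\<close> False by auto
      ultimately show ?thesis using \<open>\<not> l < l2\<close> False inr2[OF l] inr2[OF k] w[OF l] w[OF k] by simp
    qed
  qed
qed

definition g1 :: "nat \<Rightarrow> nat \<Rightarrow> nat \<Rightarrow> nat" where
  "g1 i m x = (if x = i then i + m else if i < x \<and> x \<le> i + m then x - 1 else x)"
definition h1 :: "nat \<Rightarrow> nat \<Rightarrow> nat \<Rightarrow> nat" where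
  "h1 i m x = (if x = i then Suc i else relabel i m x)"
definition g2 :: "nat \<Rightarrow> nat \<Rightarrow> nat \<Rightarrow> nat" where
  "g2 i m x = (if x = i + m then i + 2 * m else if i + m < x \<and> x \<le> i + 2 * m then x - 1 else x)"
definition h2 :: "nat \<Rightarrow> nat \<Rightarrow> nat \<Rightarrow> nat" where
  "h2 i m x = (if x = i + m then Suc i else relabel i m x)"

lemma val_P1:
  assumes m1: "1 \<le> m" and iS: "i \<in> S" and dS: "\<forall>x. i < x \<and> x \<le> i + m \<longrightarrow> x \<notin> S"
    and uS: "\<forall>x. i + m < x \<and> x \<le> i + 2 * m \<longrightarrow> x \<in> S"
  shows "g1 i m y < g1 i m x \<longleftrightarrow> (h1 i m y < h1 i m x \<or> (h1 i m y = h1 i m x \<and>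
           ((y \<in> S \<and> x \<notin> S) \<or> ((y \<in> S \<longleftrightarrow> x \<in> S) \<and> y < x))))"
  using assms unfolding g1_def h1_def relabel_def
  by (cases "x < i"; cases "y < i"; cases "x \<le> i + m"; cases "y \<le> i + m"; cases "x \<le> i + 2 * m"; cases "y \<le> i + 2 * m") (auto split: if_splits)

lemma val_P2:
  assumes m1: "1 \<le> m" and dS: "\<forall>x. i \<le> x \<and> x \<le> i + m \<longrightarrow> x \<notin> S"
    and uS: "\<forall>x. i + m < x \<and> x \<le> i + 2 * m \<longrightarrow> x \<in> S"
  shows "g2 i m y < g2 i m x \<longleftrightarrow> (h2 i m y < h2 i m x \<or> (h2 i m y = h2 i m x \<and>
           ((y \<in> S \<and> x \<notin> S) \<or> ((y \<in> S \<longleftrightarrow> x \<in> S) \<and> y < x))))"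
  using assms unfolding g2_def h2_def relabel_def
  by (cases "x < i"; cases "y < i"; cases "x < i + m"; cases "y < i + m"; cases "x \<le> i + 2 * m"; cases "y \<le> i + 2 * m") (auto split: if_splits)


lemma std_result:
  assumes T: "(r1, r2) \<in> SYT l1 l2"
    and vals: "\<forall>k. 1 \<le> k \<and> k \<le> l1 + l2 \<longrightarrow> p' k = 1 \<or> p' k = -1"
    and ordv: "\<And>x y. x \<in> {1..l1 + l2} \<Longrightarrow> y \<in> {1..l1 + l2} \<Longrightarrow> (g y < g x \<longleftrightarrow> (h y < h x \<or> (h y = h x \<and>
           ((y \<in> set r2 \<and> x \<notin> set r2) \<or> ((y \<in> set r2 \<longleftrightarrow> x \<in> set r2) \<and> y < x)))))"
    and so2: "sorted_wrt (<) (map g r2)" and so1: "sorted_wrt (<) (map g r1)"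
    and set2: "set (map g r2) = {k. 1 \<le> k \<and> k \<le> l1 + l2 \<and> p' k = 1}"
    and set1: "set (map g r1) = {k. 1 \<le> k \<and> k \<le> l1 + l2 \<and> p' k = -1}"
  shows "of_word l2 (std (map h (r2 @ r1))) = tab_of (l1 + l2) p'"
proof -
  let ?n = "l1 + l2"
  let ?w = "r2 @ r1"
  let ?u = "map g ?w"
  note F = SYT_facts[OF T]
  have lw: "length ?w = ?n" using F by simp
  have setw: "set ?w = {1..?n}" using F by auto
  have d2: "distinct (map g r2)" and d1: "distinct (map g r1)" using so1 so2 by (simp_all add: strict_sorted_iff)
  have dis: "set (map g r2) \<inter> set (map g r1) = {}" using set1 set2 by auto
  have du: "distinct ?u" using d1 d2 dis by simp
  have su: "set ?u = {1..length ?u}" using set1 set2 vals lw by auto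
  have ord: "?u ! l < ?u ! k \<longleftrightarrow> (map h ?w ! l < map h ?w ! k \<or> (map h ?w ! l = map h ?w ! k \<and> l < k))"
    if k: "k < length (map h ?w)" and l: "l < length (map h ?w)" for k l
  proof -
    have k': "k < ?n" and l': "l < ?n" using k l lw by auto
    have xk: "?w ! k \<in> {1..?n}" and yl: "?w ! l \<in> {1..?n}" using setw k' l' lw nth_mem by (metis)+
    have po: "l < k \<longleftrightarrow> ((?w ! l \<in> set r2 \<and> ?w ! k \<notin> set r2) \<or>
           ((?w ! l \<in> set r2 \<longleftrightarrow> ?w ! k \<in> set r2) \<and> ?w ! l < ?w ! k))"
      by (rule pos_order[OF T l' k'])
    have e: "?u ! l = g (?w ! l)" "?u ! k = g (?w ! k)" "map h ?w ! l = h (?w ! l)" "map h ?w ! k = h (?w ! k)"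
      using k' l' lw by (simp_all only: nth_map)
    show ?thesis unfolding e using ordv[OF xk yl] po by blast
  qed
  have st: "std (map h ?w) = ?u" by (rule std_perm[OF du su]) (use ord in auto)
  have t2: "filter (\<lambda>k. p' k = 1) [1..<?n + 1] = map g r2"
    by (rule sorted_unique) (use so2 set2 in \<open>auto simp: set_filter_upt intro: sorted_wrt_filter\<close>)
  have t1: "filter (\<lambda>k. p' k = -1) [1..<?n + 1] = map g r1"
    by (rule sorted_unique) (use so1 set1 in \<open>auto simp: set_filter_upt intro: sorted_wrt_filter\<close>)
  show ?thesis unfolding st of_word_def tab_of_def t1 t2 using F by simp
qed

declare upt_Suc[simp del]

lemma sorted_map_mono:
  fixes xs :: "nat list"
  assumes "sorted_wrt (<) xs" "\<forall>x\<in>set xs. \<forall>y\<in>set xs. x < y \<longrightarrow> f x < f y"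
  shows "sorted_wrt (<) (map f xs)"
  unfolding sorted_wrt_map using assms by (rule_tac sorted_wrt_mono_rel[of _ "(<)"]) auto

lemma map_const: "\<forall>x\<in>set xs. f x = c \<Longrightarrow> map f xs = replicate (length xs) c"
  by (induction xs) auto

lemma p_facts:
  assumes T: "(r1, r2) \<in> SYT l1 l2" and x: "x \<in> {1..l1 + l2}"
  shows "x \<in> set r2 \<longleftrightarrow> path_of (r1, r2) x = 1" and "x \<in> set r1 \<longleftrightarrow> path_of (r1, r2) x = -1"
  using SYT_facts[OF T] x unfolding path_of_def by auto

lemma p_pm: "path_of T x = 1 \<or> path_of T x = -1"
  unfolding path_of_def by auto

lemma filterI2:
  assumes T: "(r1, r2) \<in> SYT l1 l2" and i1: "1 \<le> i" and iin: "i + 2 * m \<le> l1 + l2"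
  shows "set (filter (\<lambda>x. i \<le> x \<and> x \<le> i + 2 * m) r2) = {x. i \<le> x \<and> x \<le> i + 2 * m \<and> path_of (r1, r2) x = 1}"
    and "set (filter (\<lambda>x. i \<le> x \<and> x \<le> i + 2 * m) r1) = {x. i \<le> x \<and> x \<le> i + 2 * m \<and> path_of (r1, r2) x = -1}"
proof -
  have "x \<in> {1..l1 + l2}" if "i \<le> x" "x \<le> i + 2 * m" for x using that i1 iin by auto
  then show "set (filter (\<lambda>x. i \<le> x \<and> x \<le> i + 2 * m) r2) = {x. i \<le> x \<and> x \<le> i + 2 * m \<and> path_of (r1, r2) x = 1}"
    and "set (filter (\<lambda>x. i \<le> x \<and> x \<le> i + 2 * m) r1) = {x. i \<le> x \<and> x \<le> i + 2 * m \<and> path_of (r1, r2) x = -1}"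
    using p_facts[OF T] by auto
qed

lemma AB_P1:
  assumes T: "(r1, r2) \<in> SYT l1 l2" and i1: "1 \<le> i" and iin: "i + 2 * m \<le> l1 + l2"
    and P: "pat1 (path_of (r1, r2)) i m"
  shows "filter (\<lambda>x. i \<le> x \<and> x \<le> i + 2 * m) r2 = i # [i + m + 1..<i + 2 * m + 1]"
    and "filter (\<lambda>x. i \<le> x \<and> x \<le> i + 2 * m) r1 = [i + 1..<i + m + 1]"
proof -
  let ?p = "path_of (r1, r2)"
  note F = SYT_facts[OF T]
  note S = filterI2[OF T i1 iin]
  have pi: "?p i = 1" and dn: "\<forall>k. i < k \<and> k \<le> i + m \<longrightarrow> ?p k = -1"
    and up: "\<forall>k. i + m < k \<and> k \<le> i + 2 * m \<longrightarrow> ?p k = 1" using P unfolding pat1_def by auto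
  have e2: "{x. i \<le> x \<and> x \<le> i + 2 * m \<and> ?p x = 1} = set (i # [i + m + 1..<i + 2 * m + 1])"
  proof (rule set_eqI)
    fix x
    show "x \<in> {x. i \<le> x \<and> x \<le> i + 2 * m \<and> ?p x = 1} \<longleftrightarrow> x \<in> set (i # [i + m + 1..<i + 2 * m + 1])"
    proof (cases "x = i")
      case False
      show ?thesis
      proof (cases "i < x \<and> x \<le> i + m")
        case True then show ?thesis using dn by force
      next
        case F2: False
        show ?thesis
        proof (cases "i + m < x \<and> x \<le> i + 2 * m")
          case True then show ?thesis using up by force
        next
          case False then show ?thesis using F2 \<open>x \<noteq> i\<close> by auto
        qed
      qed
    qed (use pi in auto)
  qed
  have e1: "{x. i \<le> x \<and> x \<le> i + 2 * m \<and> ?p x = -1} = set [i + 1..<i + m + 1]"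
  proof (rule set_eqI)
    fix x
    show "x \<in> {x. i \<le> x \<and> x \<le> i + 2 * m \<and> ?p x = -1} \<longleftrightarrow> x \<in> set [i + 1..<i + m + 1]"
    proof (cases "x = i")
      case False
      show ?thesis
      proof (cases "i < x \<and> x \<le> i + m")
        case True then show ?thesis using dn by force
      next
        case F2: False
        show ?thesis
        proof (cases "i + m < x \<and> x \<le> i + 2 * m")
          case True then show ?thesis using up by force
        next
          case False then show ?thesis using F2 \<open>x \<noteq> i\<close> by auto
        qed
      qed
    qed (use pi in auto)
  qed
  show "filter (\<lambda>x. i \<le> x \<and> x \<le> i + 2 * m) r2 = i # [i + m + 1..<i + 2 * m + 1]"
    by (rule sorted_unique) (use S(1) e2 F(4) in \<open>auto intro: sorted_wrt_filter\<close>)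
  show "filter (\<lambda>x. i \<le> x \<and> x \<le> i + 2 * m) r1 = [i + 1..<i + m + 1]"
    by (rule sorted_unique) (use S(2) e1 F(3) in \<open>auto intro: sorted_wrt_filter\<close>)
qed

lemma AB_P2:
  assumes T: "(r1, r2) \<in> SYT l1 l2" and i1: "1 \<le> i" and iin: "i + 2 * m \<le> l1 + l2"
    and P: "pat2 (path_of (r1, r2)) i m"
  shows "filter (\<lambda>x. i \<le> x \<and> x \<le> i + 2 * m) r2 = [i + m + 1..<i + 2 * m + 1]"
    and "filter (\<lambda>x. i \<le> x \<and> x \<le> i + 2 * m) r1 = [i..<i + m + 1]"
proof -
  let ?p = "path_of (r1, r2)"
  note F = SYT_facts[OF T]
  note S = filterI2[OF T i1 iin]
  have dn: "\<forall>k. i \<le> k \<and> k \<le> i + m \<longrightarrow> ?p k = -1"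
    and up: "\<forall>k. i + m < k \<and> k \<le> i + 2 * m \<longrightarrow> ?p k = 1" using P unfolding pat2_def by auto
  have e2: "{x. i \<le> x \<and> x \<le> i + 2 * m \<and> ?p x = 1} = set [i + m + 1..<i + 2 * m + 1]"
  proof (rule set_eqI)
    fix x
    show "x \<in> {x. i \<le> x \<and> x \<le> i + 2 * m \<and> ?p x = 1} \<longleftrightarrow> x \<in> set [i + m + 1..<i + 2 * m + 1]"
    proof (cases "i \<le> x \<and> x \<le> i + m")
      case True then show ?thesis using dn by force
    next
      case F2: False
      show ?thesis
      proof (cases "i + m < x \<and> x \<le> i + 2 * m")
        case True then show ?thesis using up by force
      next
        case False then show ?thesis using F2 by auto
      qed
    qed
  qed
  have e1: "{x. i \<le> x \<and> x \<le> i + 2 * m \<and> ?p x = -1} = set [i..<i + m + 1]"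
  proof (rule set_eqI)
    fix x
    show "x \<in> {x. i \<le> x \<and> x \<le> i + 2 * m \<and> ?p x = -1} \<longleftrightarrow> x \<in> set [i..<i + m + 1]"
    proof (cases "i \<le> x \<and> x \<le> i + m")
      case True then show ?thesis using dn by force
    next
      case F2: False
      show ?thesis
      proof (cases "i + m < x \<and> x \<le> i + 2 * m")
        case True then show ?thesis using up by force
      next
        case False then show ?thesis using F2 by auto
      qed
    qed
  qed
  show "filter (\<lambda>x. i \<le> x \<and> x \<le> i + 2 * m) r2 = [i + m + 1..<i + 2 * m + 1]"
    by (rule sorted_unique) (use S(1) e2 F(4) in \<open>auto intro: sorted_wrt_filter\<close>)
  show "filter (\<lambda>x. i \<le> x \<and> x \<le> i + 2 * m) r1 = [i..<i + m + 1]"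
    by (rule sorted_unique) (use S(2) e1 F(3) in \<open>auto intro: sorted_wrt_filter\<close>)
qed

lemma dyck_char:
  assumes T: "(r1, r2) \<in> SYT l1 l2" and i1: "1 \<le> i" and m1: "1 \<le> m" and iin: "i + 2 * m \<le> l1 + l2"
  shows "dyck_interval (l1 + l2) (row_word (r1, r2)) i m \<longleftrightarrow> (pat1 (path_of (r1, r2)) i m \<or> pat2 (path_of (r1, r2)) i m)"
proof -
  let ?p = "path_of (r1, r2)"
  let ?I = "\<lambda>x. i \<le> x \<and> x \<le> i + 2 * m"
  let ?A = "filter ?I r2" and ?B = "filter ?I r1"
  note F = SYT_facts[OF T]
  note S = filterI2[OF T i1 iin]
  have fw: "filter ?I (row_word (r1, r2)) = ?A @ ?B" unfolding row_word_def by simp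
  have D: "dyck_interval (l1 + l2) (row_word (r1, r2)) i m \<longleftrightarrow>
      insertion_tableau (?A @ ?B) = [[i..<i + m + 1], [i + m + 1..<i + 2 * m + 1]]"
    unfolding dyck_interval_def fw using i1 m1 iin by simp
  show ?thesis
  proof
    assume "dyck_interval (l1 + l2) (row_word (r1, r2)) i m"
    then have eqT: "insertion_tableau (?A @ ?B) = [[i..<i + m + 1], [i + m + 1..<i + 2 * m + 1]]" using D by simp
    have sA: "sorted_wrt (<) ?A" and sB: "sorted_wrt (<) ?B" using F(3,4) by (auto intro: sorted_wrt_filter)
    have disj: "set ?A \<inter> set ?B = {}" using S by auto
    have un: "set ?A \<union> set ?B = {i..i + 2 * m}" using S p_pm[of "(r1, r2)"] by auto
    have c: "set ?A = insert i {i + m + 1..i + 2 * m} \<or> set ?A = {i + m + 1..i + 2 * m}"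
      by (rule ins_converse[OF sA sB disj un m1 i1 eqT])
    have inA: "x \<in> set ?A \<longleftrightarrow> ?p x = 1" if "i \<le> x" "x \<le> i + 2 * m" for x using S(1) that by auto
    have nA: "?p x = -1" if "i \<le> x" "x \<le> i + 2 * m" "x \<notin> set ?A" for x
      using inA[OF that(1,2)] that(3) p_pm[of "(r1, r2)" x] by auto
    show "pat1 ?p i m \<or> pat2 ?p i m"
      using c
    proof
      assume A: "set ?A = insert i {i + m + 1..i + 2 * m}"
      have "pat1 ?p i m" unfolding pat1_def
      proof (intro conjI allI impI)
        have "i \<in> set ?A" unfolding A by simp
        then show "?p i = 1" using inA[of i] by auto
        fix k assume k: "i < k \<and> k \<le> i + m"
        then have "k \<notin> set ?A" using A by auto
        then show "?p k = -1" using nA[of k] k by auto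
      next
        fix k assume k: "i + m < k \<and> k \<le> i + 2 * m"
        then have "k \<in> set ?A" unfolding A by auto
        then show "?p k = 1" using inA[of k] k by auto
      qed
      then show ?thesis by simp
    next
      assume A: "set ?A = {i + m + 1..i + 2 * m}"
      have "pat2 ?p i m" unfolding pat2_def
      proof (intro conjI allI impI)
        fix k assume k: "i \<le> k \<and> k \<le> i + m"
        then have "k \<notin> set ?A" unfolding A by auto
        then show "?p k = -1" using nA[of k] k by auto
      next
        fix k assume k: "i + m < k \<and> k \<le> i + 2 * m"
        then have "k \<in> set ?A" unfolding A by auto
        then show "?p k = 1" using inA[of k] k by auto
      qed
      then show ?thesis by simp
    qed
  next
    assume "pat1 ?p i m \<or> pat2 ?p i m"
    then show "dyck_interval (l1 + l2) (row_word (r1, r2)) i m"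
    proof
      assume P: "pat1 ?p i m"
      show ?thesis unfolding D using AB_P1[OF T i1 iin P] target_P1[OF m1] by simp
    next
      assume P: "pat2 ?p i m"
      show ?thesis unfolding D using AB_P2[OF T i1 iin P] target_P2[OF m1] by simp
    qed
  qed
qed

lemma distinct_word:
  assumes T: "(r1, r2) \<in> SYT l1 l2"
  shows "distinct (r2 @ r1)"
  using SYT_facts[OF T] by (auto simp: strict_sorted_iff)

lemma fop_P1:
  assumes T: "(r1, r2) \<in> SYT l1 l2" and i1: "1 \<le> i" and m1: "1 \<le> m" and iin: "i + 2 * m \<le> l1 + l2"
    and P: "pat1 (path_of (r1, r2)) i m"
  shows "f_op i (map (relabel i m) (row_word (r1, r2))) = Some (map (h1 i m) (r2 @ r1))"
    and "of_word l2 (std (map (h1 i m) (r2 @ r1))) = tab_of (l1 + l2) ((path_of (r1, r2))(i := -1, i + m := 1))"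
proof -
  let ?p = "path_of (r1, r2)"
  let ?n = "l1 + l2"
  let ?rl = "relabel i m"
  note F = SYT_facts[OF T]
  note AB = AB_P1[OF T i1 iin P]
  have pi: "?p i = 1" and dn: "\<forall>k. i < k \<and> k \<le> i + m \<longrightarrow> ?p k = -1"
    and up: "\<forall>k. i + m < k \<and> k \<le> i + 2 * m \<longrightarrow> ?p k = 1" using P unfolding pat1_def by auto
  define A2 where "A2 = filter (\<lambda>x. x < i) r2"
  define A3 where "A3 = filter (\<lambda>x. i + 2 * m < x) r2"
  define B2 where "B2 = filter (\<lambda>x. x < i) r1"
  define B3 where "B3 = filter (\<lambda>x. i + 2 * m < x) r1"
  have r2d: "r2 = A2 @ (i # [i + m + 1..<i + 2 * m + 1]) @ A3"
    using sorted_split3[OF F(4), of i "i + 2 * m"] AB(1) unfolding A2_def A3_def by simp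
  have r1d: "r1 = B2 @ [i + 1..<i + m + 1] @ B3"
    using sorted_split3[OF F(3), of i "i + 2 * m"] AB(2) unfolding B2_def B3_def by simp
  have rl_id: "?rl x = x" if "x < i \<or> i + 2 * m < x" for x using that unfolding relabel_def by auto
  have mA2: "map ?rl A2 = A2" by (rule map_idI) (use rl_id in \<open>auto simp: A2_def\<close>)
  have mA3: "map ?rl A3 = A3" by (rule map_idI) (use rl_id in \<open>auto simp: A3_def\<close>)
  have mB2: "map ?rl B2 = B2" by (rule map_idI) (use rl_id in \<open>auto simp: B2_def\<close>)
  have mB3: "map ?rl B3 = B3" by (rule map_idI) (use rl_id in \<open>auto simp: B3_def\<close>)
  have mU: "map ?rl [i + m + 1..<i + 2 * m + 1] = replicate m (Suc i)"
    using map_const[of "[i + m + 1..<i + 2 * m + 1]" ?rl "Suc i"] unfolding relabel_def by auto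
  have mD: "map ?rl [i + 1..<i + m + 1] = replicate m i"
    using map_const[of "[i + 1..<i + m + 1]" ?rl i] unfolding relabel_def by auto
  have rli: "?rl i = i" unfolding relabel_def by simp
  have W: "map ?rl (row_word (r1, r2)) = A2 @ (i # (replicate m (Suc i) @ ((A3 @ B2) @ (replicate m i @ B3))))"
    unfolding row_word_def using r2d r1d mA2 mA3 mB2 mB3 mU mD rli by simp
  have noA2: "\<forall>x\<in>set A2. x \<noteq> i \<and> x \<noteq> Suc i" unfolding A2_def by auto
  have noX: "\<forall>x\<in>set (A3 @ B2). x \<noteq> i \<and> x \<noteq> Suc i" unfolding A3_def B2_def using m1 by auto
  have noB3: "\<forall>x\<in>set B3. x \<noteq> i \<and> x \<noteq> Suc i" unfolding B3_def using m1 by auto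
  have u1: "unbr i k m ((A3 @ B2) @ (replicate m i @ B3)) = []" for k
  proof -
    have "unbr i k m ((A3 @ B2) @ (replicate m i @ B3)) = unbr i (k + length (A3 @ B2)) m (replicate m i @ B3)"
      by (rule unbr_skip[OF noX])
    also have "\<dots> = unbr i (k + length (A3 @ B2) + m) 0 B3" using unbr_down[of m m i] by simp
    also have "\<dots> = []" by (rule unbr_nil[OF noB3])
    finally show ?thesis .
  qed
  have U: "unbr i 0 0 (map ?rl (row_word (r1, r2))) = [length A2]"
  proof -
    have "unbr i 0 0 (map ?rl (row_word (r1, r2))) = unbr i (length A2) 0 (i # (replicate m (Suc i) @ ((A3 @ B2) @ (replicate m i @ B3))))"
      unfolding W using unbr_skip[OF noA2, of 0 0] by simp
    also have "\<dots> = length A2 # unbr i (Suc (length A2)) 0 (replicate m (Suc i) @ ((A3 @ B2) @ (replicate m i @ B3)))"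
      by simp
    also have "unbr i (Suc (length A2)) 0 (replicate m (Suc i) @ ((A3 @ B2) @ (replicate m i @ B3)))
        = unbr i (Suc (length A2) + m) m ((A3 @ B2) @ (replicate m i @ B3))" using unbr_up by simp
    finally show ?thesis using u1 by simp
  qed
  have dw: "distinct (r2 @ r1)" by (rule distinct_word[OF T])
  have qlt: "length A2 < length (r2 @ r1)" using r2d by simp
  have wq: "(r2 @ r1) ! length A2 = i" using r2d by (simp add: nth_append)
  have h1eq: "?rl(i := Suc i) = h1 i m" unfolding h1_def by auto
  show fo: "f_op i (map ?rl (row_word (r1, r2))) = Some (map (h1 i m) (r2 @ r1))"
    unfolding f_op_def U using map_upd_distinct[OF dw qlt, of ?rl "Suc i"] wq h1eq
    by (simp add: row_word_def)
  let ?p' = "?p(i := -1, i + m := 1)"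
  have in2: "x \<in> set r2 \<longleftrightarrow> 1 \<le> x \<and> x \<le> ?n \<and> ?p x = 1" for x
  proof (cases "x \<in> {1..?n}")
    case True then show ?thesis using p_facts(1)[OF T True] by auto
  next
    case False then have "x \<notin> set r2" using F(5) by auto
    then show ?thesis using False by auto
  qed
  have in1: "x \<in> set r1 \<longleftrightarrow> 1 \<le> x \<and> x \<le> ?n \<and> ?p x = -1" for x
  proof (cases "x \<in> {1..?n}")
    case True then show ?thesis using p_facts(2)[OF T True] by auto
  next
    case False then have "x \<notin> set r1" using F(5) by auto
    then show ?thesis using False by auto
  qed
  have iS: "i \<in> set r2" using in2 pi i1 iin by simp
  have dS: "\<forall>x. i < x \<and> x \<le> i + m \<longrightarrow> x \<notin> set r2" using in2 dn by force
  have uS: "\<forall>x. i + m < x \<and> x \<le> i + 2 * m \<longrightarrow> x \<in> set r2" using in2 up i1 iin by force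
  have ni1: "i \<notin> set r1" using in1 pi by simp
  have uS1: "\<forall>x. i + m < x \<and> x \<le> i + 2 * m \<longrightarrow> x \<notin> set r1" using in1 up by force
  show "of_word l2 (std (map (h1 i m) (r2 @ r1))) = tab_of ?n ?p'"
  proof (rule std_result[OF T])
    show "\<forall>k. 1 \<le> k \<and> k \<le> ?n \<longrightarrow> ?p' k = 1 \<or> ?p' k = -1" using p_pm[of "(r1, r2)"] by auto
    show "g1 i m y < g1 i m x \<longleftrightarrow> (h1 i m y < h1 i m x \<or> (h1 i m y = h1 i m x \<and>
           ((y \<in> set r2 \<and> x \<notin> set r2) \<or> ((y \<in> set r2 \<longleftrightarrow> x \<in> set r2) \<and> y < x))))" for x y
      by (rule val_P1[OF m1 iS dS uS])
    show "sorted_wrt (<) (map (g1 i m) r2)"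
      by (rule sorted_map_mono[OF F(4)]) (use dS in \<open>auto simp: g1_def\<close>)
    show "sorted_wrt (<) (map (g1 i m) r1)"
      by (rule sorted_map_mono[OF F(3)]) (use ni1 uS1 in \<open>auto simp: g1_def\<close>)
    show "set (map (g1 i m) r2) = {k. 1 \<le> k \<and> k \<le> ?n \<and> ?p' k = 1}"
    proof (rule set_eqI)
      fix k
      show "k \<in> set (map (g1 i m) r2) \<longleftrightarrow> k \<in> {k. 1 \<le> k \<and> k \<le> ?n \<and> ?p' k = 1}"
      proof
        assume "k \<in> set (map (g1 i m) r2)"
        then obtain x where x: "x \<in> set r2" "k = g1 i m x" by auto
        show "k \<in> {k. 1 \<le> k \<and> k \<le> ?n \<and> ?p' k = 1}"
        proof (cases "x = i")
          case True then show ?thesis using x iin m1 i1 unfolding g1_def by auto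
        next
          case False
          then have "\<not> (i < x \<and> x \<le> i + m)" using dS x by auto
          then have "k = x" "x \<noteq> i + m" using x False m1 unfolding g1_def by auto
          then show ?thesis using x in2 False by auto
        qed
      next
        assume k: "k \<in> {k. 1 \<le> k \<and> k \<le> ?n \<and> ?p' k = 1}"
        show "k \<in> set (map (g1 i m) r2)"
        proof (cases "k = i + m")
          case True
          then have "k = g1 i m i" unfolding g1_def by simp
          then show ?thesis using iS by simp
        next
          case False
          have "k \<noteq> i" using k m1 by auto
          then have pk: "?p k = 1" using k False by auto
          then have "\<not> (i < k \<and> k \<le> i + m)" using dn by force
          then have "g1 i m k = k" using \<open>k \<noteq> i\<close> unfolding g1_def by auto
          moreover have "k \<in> set r2" using in2 k pk by auto
          ultimately show ?thesis by (metis image_eqI set_map)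
        qed
      qed
    qed
    show "set (map (g1 i m) r1) = {k. 1 \<le> k \<and> k \<le> ?n \<and> ?p' k = -1}"
    proof (rule set_eqI)
      fix k
      show "k \<in> set (map (g1 i m) r1) \<longleftrightarrow> k \<in> {k. 1 \<le> k \<and> k \<le> ?n \<and> ?p' k = -1}"
      proof
        assume "k \<in> set (map (g1 i m) r1)"
        then obtain x where x: "x \<in> set r1" "k = g1 i m x" by auto
        have xi: "x \<noteq> i" using x ni1 by auto
        show "k \<in> {k. 1 \<le> k \<and> k \<le> ?n \<and> ?p' k = -1}"
        proof (cases "i < x \<and> x \<le> i + m")
          case True
          then have kx: "k = x - 1" using x xi unfolding g1_def by auto
          show ?thesis
          proof (cases "x = i + 1")
            case True then show ?thesis using kx i1 iin m1 by auto
          next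
            case False
            then have "i < k \<and> k \<le> i + m" "k \<noteq> i + m" using kx \<open>i < x \<and> x \<le> i + m\<close> by auto
            then show ?thesis using dn i1 iin by auto
          qed
        next
          case False
          then have "k = x" using x xi unfolding g1_def by auto
          moreover have "x \<noteq> i + m" using False m1 by auto
          ultimately show ?thesis using x in1 xi by auto
        qed
      next
        assume k: "k \<in> {k. 1 \<le> k \<and> k \<le> ?n \<and> ?p' k = -1}"
        show "k \<in> set (map (g1 i m) r1)"
        proof (cases "i \<le> k \<and> k < i + m")
          case True
          have "i < k + 1 \<and> k + 1 \<le> i + m" using True by auto
          then have "?p (k + 1) = -1" "k + 1 \<noteq> i" using dn by auto
          then have "k + 1 \<in> set r1" using in1 True iin by auto
          moreover have "g1 i m (k + 1) = k" using True \<open>k + 1 \<noteq> i\<close> unfolding g1_def by auto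
          ultimately show ?thesis by (metis image_eqI set_map)
        next
          case False
          have "k \<noteq> i + m" using k by auto
          then have ki: "k \<noteq> i" "\<not> (i < k \<and> k \<le> i + m)" using False m1 by auto
          then have "?p k = -1" using k \<open>k \<noteq> i + m\<close> by auto
          then have "k \<in> set r1" using in1 k by auto
          moreover have "g1 i m k = k" using ki unfolding g1_def by auto
          ultimately show ?thesis by (metis image_eqI set_map)
        qed
      qed
    qed
  qed
qed

lemma fop_P2:
  assumes T: "(r1, r2) \<in> SYT l1 l2" and i1: "1 \<le> i" and m1: "1 \<le> m" and iin: "i + 2 * m \<le> l1 + l2"
    and P: "pat2 (path_of (r1, r2)) i m"
  shows "f_op i (map (relabel i m) (row_word (r1, r2))) = Some (map (h2 i m) (r2 @ r1))"
    and "of_word l2 (std (map (h2 i m) (r2 @ r1))) = tab_of (l1 + l2) ((path_of (r1, r2))(i + m := 1, i + 2 * m := -1))"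
proof -
  let ?p = "path_of (r1, r2)"
  let ?n = "l1 + l2"
  let ?rl = "relabel i m"
  note F = SYT_facts[OF T]
  note AB = AB_P2[OF T i1 iin P]
  have dn: "\<forall>k. i \<le> k \<and> k \<le> i + m \<longrightarrow> ?p k = -1"
    and up: "\<forall>k. i + m < k \<and> k \<le> i + 2 * m \<longrightarrow> ?p k = 1" using P unfolding pat2_def by auto
  define A2 where "A2 = filter (\<lambda>x. x < i) r2"
  define A3 where "A3 = filter (\<lambda>x. i + 2 * m < x) r2"
  define B2 where "B2 = filter (\<lambda>x. x < i) r1"
  define B3 where "B3 = filter (\<lambda>x. i + 2 * m < x) r1"
  have r2d: "r2 = A2 @ [i + m + 1..<i + 2 * m + 1] @ A3"
    using sorted_split3[OF F(4), of i "i + 2 * m"] AB(1) unfolding A2_def A3_def by simp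
  have r1d: "r1 = B2 @ [i..<i + m + 1] @ B3"
    using sorted_split3[OF F(3), of i "i + 2 * m"] AB(2) unfolding B2_def B3_def by simp
  have rl_id: "?rl x = x" if "x < i \<or> i + 2 * m < x" for x using that unfolding relabel_def by auto
  have mA2: "map ?rl A2 = A2" by (rule map_idI) (use rl_id in \<open>auto simp: A2_def\<close>)
  have mA3: "map ?rl A3 = A3" by (rule map_idI) (use rl_id in \<open>auto simp: A3_def\<close>)
  have mB2: "map ?rl B2 = B2" by (rule map_idI) (use rl_id in \<open>auto simp: B2_def\<close>)
  have mB3: "map ?rl B3 = B3" by (rule map_idI) (use rl_id in \<open>auto simp: B3_def\<close>)
  have mU: "map ?rl [i + m + 1..<i + 2 * m + 1] = replicate m (Suc i)"
    using map_const[of "[i + m + 1..<i + 2 * m + 1]" ?rl "Suc i"] unfolding relabel_def by auto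
  have mD: "map ?rl [i..<i + m + 1] = replicate m i @ [i]"
  proof -
    have "map ?rl [i..<i + m + 1] = replicate (m + 1) i"
      using map_const[of "[i..<i + m + 1]" ?rl i] unfolding relabel_def by auto
    then show ?thesis by (simp add: replicate_append_same[symmetric])
  qed
  have W: "map ?rl (row_word (r1, r2)) = A2 @ (replicate m (Suc i) @ ((A3 @ B2) @ (replicate m i @ (i # B3))))"
    unfolding row_word_def using r2d r1d mA2 mA3 mB2 mB3 mU mD by simp
  have noA2: "\<forall>x\<in>set A2. x \<noteq> i \<and> x \<noteq> Suc i" unfolding A2_def by auto
  have noX: "\<forall>x\<in>set (A3 @ B2). x \<noteq> i \<and> x \<noteq> Suc i" unfolding A3_def B2_def using m1 by auto
  have noB3: "\<forall>x\<in>set B3. x \<noteq> i \<and> x \<noteq> Suc i" unfolding B3_def using m1 by auto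
  define q where "q = length A2 + m + length (A3 @ B2) + m"
  have U: "unbr i 0 0 (map ?rl (row_word (r1, r2))) = [q]"
  proof -
    have "unbr i 0 0 (map ?rl (row_word (r1, r2))) = unbr i (length A2) 0 (replicate m (Suc i) @ ((A3 @ B2) @ (replicate m i @ (i # B3))))"
      unfolding W using unbr_skip[OF noA2, of 0 0] by simp
    also have "\<dots> = unbr i (length A2 + m) m ((A3 @ B2) @ (replicate m i @ (i # B3)))" using unbr_up by simp
    also have "\<dots> = unbr i (length A2 + m + length (A3 @ B2)) m (replicate m i @ (i # B3))"
      by (rule unbr_skip[OF noX])
    also have "\<dots> = unbr i q 0 (i # B3)" unfolding q_def using unbr_down[of m m i] by simp
    also have "\<dots> = q # unbr i (Suc q) 0 B3" by simp
    also have "\<dots> = [q]" using unbr_nil[OF noB3] by simp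
    finally show ?thesis .
  qed
  have dw: "distinct (r2 @ r1)" by (rule distinct_word[OF T])
  have lr2: "length r2 = length A2 + m + length A3" using r2d by simp
  have qlt: "q < length (r2 @ r1)" unfolding q_def using r1d lr2 by simp
  have wq: "(r2 @ r1) ! q = i + m"
  proof -
    have "(r2 @ r1) ! q = r1 ! (length B2 + m)" unfolding q_def using lr2 by (simp add: nth_append)
    also have "\<dots> = [i..<i + m + 1] ! m" using r1d by (simp add: nth_append)
    finally show ?thesis by simp
  qed
  have h2eq: "?rl(i + m := Suc i) = h2 i m" unfolding h2_def by auto
  show fo: "f_op i (map ?rl (row_word (r1, r2))) = Some (map (h2 i m) (r2 @ r1))"
    unfolding f_op_def U using map_upd_distinct[OF dw qlt, of ?rl "Suc i"] wq h2eq
    by (simp add: row_word_def)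
  let ?p' = "?p(i + m := 1, i + 2 * m := -1)"
  have in2: "x \<in> set r2 \<longleftrightarrow> 1 \<le> x \<and> x \<le> ?n \<and> ?p x = 1" for x
  proof (cases "x \<in> {1..?n}")
    case True then show ?thesis using p_facts(1)[OF T True] by auto
  next
    case False then have "x \<notin> set r2" using F(5) by auto
    then show ?thesis using False by auto
  qed
  have in1: "x \<in> set r1 \<longleftrightarrow> 1 \<le> x \<and> x \<le> ?n \<and> ?p x = -1" for x
  proof (cases "x \<in> {1..?n}")
    case True then show ?thesis using p_facts(2)[OF T True] by auto
  next
    case False then have "x \<notin> set r1" using F(5) by auto
    then show ?thesis using False by auto
  qed
  have dS: "\<forall>x. i \<le> x \<and> x \<le> i + m \<longrightarrow> x \<notin> set r2" using in2 dn by force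
  have uS: "\<forall>x. i + m < x \<and> x \<le> i + 2 * m \<longrightarrow> x \<in> set r2" using in2 up i1 iin by force
  have uS1: "\<forall>x. i + m < x \<and> x \<le> i + 2 * m \<longrightarrow> x \<notin> set r1" using in1 up by force
  have im1: "i + m \<in> set r1" using in1 dn i1 iin by auto
  show "of_word l2 (std (map (h2 i m) (r2 @ r1))) = tab_of ?n ?p'"
  proof (rule std_result[OF T])
    show "\<forall>k. 1 \<le> k \<and> k \<le> ?n \<longrightarrow> ?p' k = 1 \<or> ?p' k = -1" using p_pm[of "(r1, r2)"] by auto
    show "g2 i m y < g2 i m x \<longleftrightarrow> (h2 i m y < h2 i m x \<or> (h2 i m y = h2 i m x \<and>
           ((y \<in> set r2 \<and> x \<notin> set r2) \<or> ((y \<in> set r2 \<longleftrightarrow> x \<in> set r2) \<and> y < x))))" for x y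
      by (rule val_P2[OF m1 dS uS])
    show "sorted_wrt (<) (map (g2 i m) r2)"
      by (rule sorted_map_mono[OF F(4)]) (use dS in \<open>auto simp: g2_def\<close>)
    show "sorted_wrt (<) (map (g2 i m) r1)"
      by (rule sorted_map_mono[OF F(3)]) (use uS1 in \<open>auto simp: g2_def\<close>)
    show "set (map (g2 i m) r2) = {k. 1 \<le> k \<and> k \<le> ?n \<and> ?p' k = 1}"
    proof (rule set_eqI)
      fix k
      show "k \<in> set (map (g2 i m) r2) \<longleftrightarrow> k \<in> {k. 1 \<le> k \<and> k \<le> ?n \<and> ?p' k = 1}"
      proof
        assume "k \<in> set (map (g2 i m) r2)"
        then obtain x where x: "x \<in> set r2" "k = g2 i m x" by auto
        have xn: "\<not> (i \<le> x \<and> x \<le> i + m)" using dS x by auto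
        show "k \<in> {k. 1 \<le> k \<and> k \<le> ?n \<and> ?p' k = 1}"
        proof (cases "i + m < x \<and> x \<le> i + 2 * m")
          case True
          then have kx: "k = x - 1" using x unfolding g2_def by auto
          show ?thesis
          proof (cases "x = i + m + 1")
            case True then show ?thesis using kx i1 iin m1 by auto
          next
            case False
            then have "i + m < k \<and> k \<le> i + 2 * m" "k \<noteq> i + 2 * m" using kx \<open>i + m < x \<and> x \<le> i + 2 * m\<close> by auto
            then show ?thesis using up i1 iin by auto
          qed
        next
          case False
          then have "k = x" "x \<noteq> i + m" "x \<noteq> i + 2 * m" using x xn m1 unfolding g2_def by auto
          then show ?thesis using x in2 by auto
        qed
      next
        assume k: "k \<in> {k. 1 \<le> k \<and> k \<le> ?n \<and> ?p' k = 1}"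
        show "k \<in> set (map (g2 i m) r2)"
        proof (cases "i + m \<le> k \<and> k < i + 2 * m")
          case True
          have "i + m < k + 1 \<and> k + 1 \<le> i + 2 * m" using True by auto
          then have "k + 1 \<in> set r2" using uS by blast
          moreover have "g2 i m (k + 1) = k" using True unfolding g2_def by auto
          ultimately show ?thesis by (metis image_eqI set_map)
        next
          case False
          have "k \<noteq> i + 2 * m" using k m1 by auto
          then have ki: "\<not> (i + m \<le> k \<and> k \<le> i + 2 * m)" using False by auto
          then have pk: "?p k = 1" using k by auto
          then have "\<not> (i \<le> k \<and> k \<le> i + m)" using dn by force
          then have "g2 i m k = k" using ki unfolding g2_def by auto
          moreover have "k \<in> set r2" using in2 k pk by auto
          ultimately show ?thesis by (metis image_eqI set_map)
        qed
      qed
    qed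
    show "set (map (g2 i m) r1) = {k. 1 \<le> k \<and> k \<le> ?n \<and> ?p' k = -1}"
    proof (rule set_eqI)
      fix k
      show "k \<in> set (map (g2 i m) r1) \<longleftrightarrow> k \<in> {k. 1 \<le> k \<and> k \<le> ?n \<and> ?p' k = -1}"
      proof
        assume "k \<in> set (map (g2 i m) r1)"
        then obtain x where x: "x \<in> set r1" "k = g2 i m x" by auto
        have xn: "\<not> (i + m < x \<and> x \<le> i + 2 * m)" using uS1 x by auto
        show "k \<in> {k. 1 \<le> k \<and> k \<le> ?n \<and> ?p' k = -1}"
        proof (cases "x = i + m")
          case True then show ?thesis using x i1 iin unfolding g2_def by auto
        next
          case False
          then have "k = x" using x xn unfolding g2_def by auto
          moreover have "x \<noteq> i + 2 * m" using xn m1 by auto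
          ultimately show ?thesis using x in1 False by auto
        qed
      next
        assume k: "k \<in> {k. 1 \<le> k \<and> k \<le> ?n \<and> ?p' k = -1}"
        show "k \<in> set (map (g2 i m) r1)"
        proof (cases "k = i + 2 * m")
          case True
          then have "k = g2 i m (i + m)" unfolding g2_def by simp
          then show ?thesis using im1 by simp
        next
          case False
          have "k \<noteq> i + m" using k False by auto
          then have pk: "?p k = -1" using k False by auto
          then have "\<not> (i + m < k \<and> k \<le> i + 2 * m)" using up by force
          then have "g2 i m k = k" using \<open>k \<noteq> i + m\<close> unfolding g2_def by auto
          moreover have "k \<in> set r1" using in1 k pk by auto
          ultimately show ?thesis by (metis image_eqI set_map)
        qed
      qed
    qed
  qed
qed

lemma runs_concat: "concat (runs P xs) = xs"
  by (induction xs) (auto split: list.splits)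

lemma runs_nonempty: "r \<in> set (runs P xs) \<Longrightarrow> r \<noteq> []"
  by (induction xs arbitrary: r) (auto split: list.splits if_splits)

lemma runs_parity:
  "xs \<noteq> [] \<Longrightarrow> k < length (runs P xs) \<Longrightarrow> y \<in> set (runs P xs ! k) \<Longrightarrow> (P y \<longleftrightarrow> (P (hd xs) \<longleftrightarrow> even k))"
proof (induction xs arbitrary: k y)
  case Nil then show ?case by simp
next
  case (Cons x xs)
  show ?case
  proof (cases "runs P xs")
    case Nil
    then have "runs P (x # xs) = [[x]]" by simp
    then show ?thesis using Cons.prems by auto
  next
    case (Cons r rs)
    have rne: "r \<noteq> []" using runs_nonempty[of r P xs] Cons by simp
    have xsne: "xs \<noteq> []" using runs_concat[of P xs] Cons rne by auto
    have hdr: "hd r = hd xs" using runs_concat[of P xs] Cons rne by (cases r) auto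
    note IH = "Cons.IH"[OF xsne]
    show ?thesis
    proof (cases "P (hd r) = P x")
      case True
      then have R: "runs P (x # xs) = (x # r) # rs" using Cons rne by simp
      show ?thesis
      proof (cases k)
        case 0
        then have "y = x \<or> y \<in> set r" using Cons.prems R by auto
        then show ?thesis
        proof
          assume "y \<in> set r"
          then have "P y \<longleftrightarrow> (P (hd xs) \<longleftrightarrow> even (0::nat))" using IH[of 0 y] Cons by simp
          then show ?thesis using 0 True hdr by simp
        qed (use 0 in simp)
      next
        case (Suc k')
        then have "y \<in> set (runs P xs ! k)" "k < length (runs P xs)" using Cons.prems R Cons by auto
        then show ?thesis using IH[of k y] True hdr by simp
      qed
    next
      case False
      then have R: "runs P (x # xs) = [x] # r # rs" using Cons rne by auto
      show ?thesis
      proof (cases k)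
        case 0 then show ?thesis using Cons.prems R by simp
      next
        case (Suc k')
        then have "y \<in> set (runs P xs ! k')" "k' < length (runs P xs)" using Cons.prems R Cons by auto
        then have "P y \<longleftrightarrow> (P (hd xs) \<longleftrightarrow> even k')" using IH by blast
        then show ?thesis using Suc False hdr by auto
      qed
    qed
  qed
qed

lemma decode:
  fixes xs :: "'a list"
  assumes ne: "xs \<noteq> []" and x: "x \<in> set xs" and post: "\<forall>s\<in>set post. s = []"
  shows "P x \<longleftrightarrow> (\<exists>k<length (map set ((if P (hd (hd (runs P xs))) then [] else [[]]) @ runs P xs @ post)).
      even k \<and> x \<in> map set ((if P (hd (hd (runs P xs))) then [] else [[]]) @ runs P xs @ post) ! k)"
    (is "_ \<longleftrightarrow> (\<exists>k<length ?L. even k \<and> x \<in> ?L ! k)")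
proof -
  let ?R = "runs P xs"
  let ?pre = "(if P (hd (hd ?R)) then [] else [[]]) :: 'a list list"
  have Rne: "?R \<noteq> []" using runs_concat[of P xs] ne by auto
  have hd1: "hd (hd ?R) = hd xs"
  proof -
    obtain r rs where "?R = r # rs" using Rne by (cases ?R) auto
    moreover have "r \<noteq> []" using runs_nonempty[of r P xs] calculation by simp
    ultimately show ?thesis using runs_concat[of P xs] by (cases r) auto
  qed
  have idx: "?L ! (j + length ?pre) = set (?R ! j)" if "j < length ?R" for j
    using that by (simp add: nth_append)
  have par: "P y \<longleftrightarrow> even (j + length ?pre)" if "j < length ?R" "y \<in> set (?R ! j)" for j y
    using runs_parity[OF ne that] hd1 by auto
  show ?thesis
  proof
    assume Px: "P x"
    obtain j where j: "j < length ?R" "x \<in> set (?R ! j)"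
      using x runs_concat[of P xs] by (metis in_set_conv_nth set_concat UN_iff)
    have "even (j + length ?pre)" using par[OF j] Px by simp
    moreover have "j + length ?pre < length ?L" using j by simp
    ultimately show "\<exists>k<length ?L. even k \<and> x \<in> ?L ! k" using idx[OF j(1)] j(2) by metis
  next
    assume "\<exists>k<length ?L. even k \<and> x \<in> ?L ! k"
    then obtain k where k: "k < length ?L" "even k" "x \<in> ?L ! k" by blast
    have L: "?L = map set ?pre @ map set ?R @ map set post" by simp
    show "P x"
    proof (cases "k < length ?pre")
      case True
      then have "?L ! k = {}" by (auto simp: nth_append split: if_splits)
      then show ?thesis using k by simp
    next
      case False
      show ?thesis
      proof (cases "k < length ?pre + length ?R")
        case True
        define j where "j = k - length ?pre"
        have j: "j < length ?R" "k = j + length ?pre" using True False unfolding j_def by auto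
        then have "x \<in> set (?R ! j)" using idx k by simp
        then show ?thesis using par[OF j(1)] j k by simp
      next
        case F2: False
        define pre where "pre = ?pre"
        define R where "R = ?R"
        have L2: "?L = (map set pre @ map set R) @ map set post" unfolding pre_def R_def by simp
        have k2: "length pre + length R \<le> k" using F2 unfolding pre_def R_def by simp
        have nl: "\<not> k < length (map set pre @ map set R)" using k2 by simp
        have kl: "k < length pre + length R + length post" using k(1) unfolding pre_def R_def by simp
        have e1: "?L ! k = map set post ! (k - length (map set pre @ map set R))"
          unfolding L2 by (simp only: nth_append nl if_False)
        have e2: "map set post ! (k - length (map set pre @ map set R)) = set (post ! (k - length pre - length R))"
          using kl k2 by simp
        have e: "?L ! k = set (post ! (k - length pre - length R))" using e1 e2 by simp
        have "post ! (k - length pre - length R) \<in> set post" using kl k2 by simp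
        then have "post ! (k - length pre - length R) = []" using post by blast
        then show ?thesis using k(3) e by simp
      qed
    qed
  qed
qed

lemma rcomp_ee:
  assumes n1: "1 \<le> n" and eq: "rcomp n p = rcomp n q"
  shows "eastern_exposed n p = eastern_exposed n q"
proof
  fix x
  show "eastern_exposed n p x = eastern_exposed n q x"
  proof (cases "x \<in> set [1..<n + 1]")
    case False
    then show ?thesis unfolding eastern_exposed_def by auto
  next
    case True
    have ne: "[1..<n + 1] \<noteq> []" using n1 by simp
    have Rp: "runs (eastern_exposed n p) [1..<n + 1] \<noteq> []" using runs_concat[of _ "[1..<n+1]"] ne by (metis concat.simps(1))
    have Rq: "runs (eastern_exposed n q) [1..<n + 1] \<noteq> []" using runs_concat[of _ "[1..<n+1]"] ne by (metis concat.simps(1))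
    have post: "\<forall>s\<in>set (if P then [] else [[]]). s = []" for P :: bool by auto
    have dp: "eastern_exposed n p x \<longleftrightarrow> (\<exists>k<length (rcomp n p). even k \<and> x \<in> rcomp n p ! k)"
      unfolding rcomp_def Let_def using Rp decode[OF ne True post] by simp
    have dq: "eastern_exposed n q x \<longleftrightarrow> (\<exists>k<length (rcomp n q). even k \<and> x \<in> rcomp n q ! k)"
      unfolding rcomp_def Let_def using Rq decode[OF ne True post] by simp
    show ?thesis using dp dq eq by simp
  qed
qed

lemma ee_rcomp: "eastern_exposed n p = eastern_exposed n q \<Longrightarrow> rcomp n p = rcomp n q"
  unfolding rcomp_def Let_def by simp

lemma edge_mv:
  assumes l: "l2 \<le> l1" and E: "CS_edge l1 l2 T T'"
  shows "mvrel (l1 + l2) (path_of T) (path_of T')"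
proof -
  let ?n = "l1 + l2"
  obtain i m w' where T: "T \<in> SYT l1 l2" and T': "T' \<in> SYT l1 l2"
    and D: "dyck_interval ?n (row_word T) i m" and fo: "f_op i (map (relabel i m) (row_word T)) = Some w'"
    and Tw: "T' = of_word l2 (std w')"
    using E unfolding CS_edge_def by blast
  obtain r1 r2 where TT: "T = (r1, r2)" by (cases T)
  let ?p = "path_of (r1, r2)"
  have im: "1 \<le> m" "1 \<le> i" "i + 2 * m \<le> ?n" using D unfolding dyck_interval_def by auto
  have T0: "(r1, r2) \<in> SYT l1 l2" using T TT by simp
  have pp: "pat1 ?p i m \<or> pat2 ?p i m" using dyck_char[OF T0 im(2) im(1) im(3)] D TT by simp
  have v: "valid ?n (int l2 - int l1) ?p" using SYT_valid(1)[OF T0 l] .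
  show ?thesis
    using pp
  proof
    assume P: "pat1 ?p i m"
    let ?q = "?p(i := -1, i + m := 1)"
    have mv: "mvrel ?n ?p ?q" unfolding mvrel_def using im P by blast
    have vq: "valid ?n (int l2 - int l1) ?q" by (rule mv_valid[OF v mv])
    have "w' = map (h1 i m) (r2 @ r1)" using fop_P1(1)[OF T0 im(2) im(1) im(3) P] fo TT by simp
    then have "T' = tab_of ?n ?q" using fop_P1(2)[OF T0 im(2) im(1) im(3) P] Tw by simp
    then have "path_of T' = ?q" using valid_SYT(2)[OF vq l] by simp
    then show ?thesis using mv TT by simp
  next
    assume P: "pat2 ?p i m"
    let ?q = "?p(i + m := 1, i + 2 * m := -1)"
    have mv: "mvrel ?n ?p ?q" unfolding mvrel_def using im P by blast
    have vq: "valid ?n (int l2 - int l1) ?q" by (rule mv_valid[OF v mv])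
    have "w' = map (h2 i m) (r2 @ r1)" using fop_P2(1)[OF T0 im(2) im(1) im(3) P] fo TT by simp
    then have "T' = tab_of ?n ?q" using fop_P2(2)[OF T0 im(2) im(1) im(3) P] Tw by simp
    then have "path_of T' = ?q" using valid_SYT(2)[OF vq l] by simp
    then show ?thesis using mv TT by simp
  qed
qed

lemma mv_edge:
  assumes l: "l2 \<le> l1" and v: "valid (l1 + l2) (int l2 - int l1) p" and mv: "mvrel (l1 + l2) p q"
  shows "CS_edge l1 l2 (tab_of (l1 + l2) p) (tab_of (l1 + l2) q)"
proof -
  let ?n = "l1 + l2"
  have vq: "valid ?n (int l2 - int l1) q" by (rule mv_valid[OF v mv])
  have S1: "tab_of ?n p \<in> SYT l1 l2" and pp: "path_of (tab_of ?n p) = p" using valid_SYT[OF v l] by auto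
  have S2: "tab_of ?n q \<in> SYT l1 l2" using valid_SYT[OF vq l] by auto
  obtain r1 r2 where TT: "tab_of ?n p = (r1, r2)" by (cases "tab_of ?n p")
  have T0: "(r1, r2) \<in> SYT l1 l2" using S1 TT by simp
  have pe: "path_of (r1, r2) = p" using pp TT by simp
  obtain i m where im: "1 \<le> m" "1 \<le> i" "i + 2 * m \<le> ?n"
    and c: "(pat1 p i m \<and> q = p(i := -1, i + m := 1)) \<or> (pat2 p i m \<and> q = p(i + m := 1, i + 2 * m := -1))"
    using mv unfolding mvrel_def by blast
  have D: "dyck_interval ?n (row_word (r1, r2)) i m" using dyck_char[OF T0 im(2) im(1) im(3)] c pe by auto
  show ?thesis
    using c
  proof
    assume P: "pat1 p i m \<and> q = p(i := -1, i + m := 1)"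
    then have P': "pat1 (path_of (r1, r2)) i m" using pe by simp
    note f = fop_P1[OF T0 im(2) im(1) im(3) P']
    show ?thesis unfolding CS_edge_def
      using S1 S2 TT D f P pe by (intro conjI exI[of _ i] exI[of _ m] exI[of _ "map (h1 i m) (r2 @ r1)"]) auto
  next
    assume P: "pat2 p i m \<and> q = p(i + m := 1, i + 2 * m := -1)"
    then have P': "pat2 (path_of (r1, r2)) i m" using pe by simp
    note f = fop_P2[OF T0 im(2) im(1) im(3) P']
    show ?thesis unfolding CS_edge_def
      using S1 S2 TT D f P pe by (intro conjI exI[of _ i] exI[of _ m] exI[of _ "map (h2 i m) (r2 @ r1)"]) auto
  qed
qed

lemma phi_ee: "ee n p = ee n q \<Longrightarrow> phi n p = phi n q"
  unfolding phi_def by simp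

lemma path_phi:
  assumes l: "l2 \<le> l1" and R: "(CS_edge l1 l2)\<^sup>*\<^sup>* T T'"
  shows "ee (l1 + l2) (path_of T') = ee (l1 + l2) (path_of T) \<or> phi (l1 + l2) (path_of T) < phi (l1 + l2) (path_of T')"
  using R
proof (induction rule: rtranclp_induct)
  case base then show ?case by simp
next
  case (step y z)
  have "ee (l1 + l2) (path_of z) = ee (l1 + l2) (path_of y) \<or> phi (l1 + l2) (path_of y) < phi (l1 + l2) (path_of z)"
    using mv_phi[OF edge_mv[OF l step.hyps(2)]] .
  then show ?case using step.IH phi_ee[of "l1 + l2" "path_of y" "path_of T"] phi_ee[of "l1 + l2" "path_of z" "path_of y"] by auto
qed

lemma valid_rt:
  assumes "(mvrel n)\<^sup>*\<^sup>* p q" "valid n hn p"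
  shows "valid n hn q"
  using assms by (induction rule: rtranclp_induct) (auto intro: mv_valid)

lemma lift:
  assumes l: "l2 \<le> l1" and v: "valid (l1 + l2) (int l2 - int l1) p" and R: "(mvrel (l1 + l2))\<^sup>*\<^sup>* p q"
  shows "(CS_edge l1 l2)\<^sup>*\<^sup>* (tab_of (l1 + l2) p) (tab_of (l1 + l2) q)"
  using R
proof (induction rule: rtranclp_induct)
  case base then show ?case by simp
next
  case (step y z)
  have vy: "valid (l1 + l2) (int l2 - int l1) y" by (rule valid_rt[OF step.hyps(1) v])
  show ?case using step.IH mv_edge[OF l vy step.hyps(2)] by (rule rtranclp.rtrancl_into_rtrancl)
qed

theorem corollary6p6:
  fixes l1 l2 :: nat and T T' :: tab
  assumes "1 \<le> l2" and "l2 \<le> l1"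
    and "T \<in> SYT l1 l2" and "T' \<in> SYT l1 l2"
  shows "same_scc l1 l2 T T' \<longleftrightarrow>
         rcomp (l1 + l2) (path_of T) = rcomp (l1 + l2) (path_of T')"
proof
  assume S: "same_scc l1 l2 T T'"
  then have R1: "(CS_edge l1 l2)\<^sup>*\<^sup>* T T'" and R2: "(CS_edge l1 l2)\<^sup>*\<^sup>* T' T" unfolding same_scc_def by auto
  have a: "ee (l1 + l2) (path_of T') = ee (l1 + l2) (path_of T) \<or> phi (l1 + l2) (path_of T) < phi (l1 + l2) (path_of T')"
    by (rule path_phi[OF assms(2) R1])
  have b: "ee (l1 + l2) (path_of T) = ee (l1 + l2) (path_of T') \<or> phi (l1 + l2) (path_of T') < phi (l1 + l2) (path_of T)"
    by (rule path_phi[OF assms(2) R2])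
  have "ee (l1 + l2) (path_of T) = ee (l1 + l2) (path_of T')" using a b by auto
  then show "rcomp (l1 + l2) (path_of T) = rcomp (l1 + l2) (path_of T')" by (rule ee_rcomp)
next
  assume E: "rcomp (l1 + l2) (path_of T) = rcomp (l1 + l2) (path_of T')"
  have n1: "1 \<le> l1 + l2" using assms(1) by simp
  have eq: "ee (l1 + l2) (path_of T) = ee (l1 + l2) (path_of T')" by (rule rcomp_ee[OF n1 E])
  have v1: "valid (l1 + l2) (int l2 - int l1) (path_of T)" and t1: "tab_of (l1 + l2) (path_of T) = T"
    using SYT_valid[OF assms(3,2)] by auto
  have v2: "valid (l1 + l2) (int l2 - int l1) (path_of T')" and t2: "tab_of (l1 + l2) (path_of T') = T'"
    using SYT_valid[OF assms(4,2)] by auto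
  have "(CS_edge l1 l2)\<^sup>*\<^sup>* T T'" using lift[OF assms(2) v1 connect[OF v1 v2 eq]] t1 t2 by simp
  moreover have "(CS_edge l1 l2)\<^sup>*\<^sup>* T' T" using lift[OF assms(2) v2 connect[OF v2 v1 eq[symmetric]]] t1 t2 by simp
  ultimately show "same_scc l1 l2 T T'" unfolding same_scc_def by simp
qed

end
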